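(* The following algorithm is a linearizable, sequentially-exact, wait-free and fence-free implementation of RangeMaxRegister. It uses only atomic Read/Write objects and has constant step complexity in all its operations. The shared object is an atomic Read/Write register $R$ initialized to $1$. Each process has a persistent local variable $r$ initialized to $1$. ${\sf RMaxWrite}(x)$: $r\leftarrow\max\{r,R.{\sf Read}()\}$; if $x>r$ then $\{r\leftarrow x,\ R.{\sf Write}(x)\}$; return true. ${\sf RMaxRead}()$: $r\leftarrow\max\{r,R.{\sf Read}()\}$; return $r$.
   Context: Model: $n\ge2$ asynchronous, crash-prone processes $p_0,\dots,p_{n-1}$ communicate through atomic base objects. Each atomic base-object operation is one step. The notation $\{I_1,I_2\}$ means the two instructions may be executed in either order. RangeMaxRegister (sequential specification). States are $n$-vectors $(r_0,\dots,r_{n-1})$ of natural numbers, with initial state $(1,\dots,1)$. Invocations by $p_i$ carry subscript $i$. - ${\sf RMaxWrite}_i(x)$ sets $r_i\leftarrow x$ if $x>r_i$ (otherwise leaves the state unchanged) and returns true. - ${\sf RMaxRead}_i()$ may return any $x\in\{r_i,r_i+1,\dots,\max(r_0,\dots,r_{n-1})\}$, and sets $r_i\leftarrow x$. MaxRegister (sequential specification, initial value $1$). MaxWrite$(v)$ writes $v$ only if $v$ exceeds the largest value written so far. MaxRead returns the largest value written so far. Properties: - Linearizable: every finite execution admits a total order of its completed (and possibly some pending) operations that is a sequential execution of the specification, respects real-time order, and agrees on inputs and outputs. - Sequentially-exact: every sequential execution of the algorithm (one in which no two operations overlap) is a sequential execution of MaxRegister, with RMaxRead and RMaxWrite read as MaxRead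 and MaxWrite. - Wait-free: every operation of a process that keeps taking steps completes in finitely many of its own steps. - Fence-free: the algorithm requires no ordering among its steps beyond data dependence. - Step complexity: the maximum number of steps needed to complete an operation. *)

theory Defs
  imports Main
begin

datatype rop = RMaxWrite nat | RMaxRead
datatype resp = RTrue | RVal nat

text \<open>Actions of an execution: invocation of an operation by process i,
  one atomic base-object step of process i (a Read or a Write of R),
  and the (local) return of a response by process i.\<close>
datatype act = Invoke nat rop | Step nat | Return nat resp

fun act_proc :: "act \<Rightarrow> nat" where
  "act_proc (Invoke i _) = i" | "act_proc (Step i) = i" | "act_proc (Return i _) = i"

fun is_inv :: "act \<Rightarrow> bool" where
  "is_inv (Invoke _ _) = True" | "is_inv _ = False"

fun inv_op :: "act \<Rightarrow> rop" where
  "inv_op (Invoke _ ov) = ov" | "inv_op _ = undefined"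

fun is_ret_of :: "nat \<Rightarrow> act \<Rightarrow> bool" where
  "is_ret_of i (Return j _) = (i = j)" | "is_ret_of i _ = False"

fun ret_resp :: "act \<Rightarrow> resp" where
  "ret_resp (Return _ v) = v" | "ret_resp _ = undefined"

text \<open>WRd x: next step is R.Read() inside RMaxWrite(x).
  WWrA x: r <- x already done, next step is R.Write(x).
  WWrB x: next step is R.Write(x), after which r <- x is done
  (the two orders of the block {r <- x, R.Write(x)}).
  RRd: next step is R.Read() inside RMaxRead().
  Done v: operation finished locally, about to return v.\<close>
datatype pcs = Idle | WRd nat | WWrA nat | WWrB nat | RRd | Done resp

record config =
  shR :: nat
  lr  :: "nat \<Rightarrow> nat"
  pc  :: "nat \<Rightarrow> pcs"

definition init :: config where
  "init = \<lparr>shR = 1, lr = (\<lambda>_. 1), pc = (\<lambda>_. Idle)\<rparr>"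

fun start :: "rop \<Rightarrow> pcs" where
  "start (RMaxWrite x) = WRd x" | "start RMaxRead = RRd"

inductive trans :: "nat \<Rightarrow> config \<Rightarrow> act \<Rightarrow> config \<Rightarrow> bool" for n where
  invoke: "\<lbrakk>i < n; pc c i = Idle\<rbrakk> \<Longrightarrow>
     trans n c (Invoke i ov) (c\<lparr>pc := (pc c)(i := start ov)\<rparr>)"
| w_read_gt_A: "\<lbrakk>i < n; pc c i = WRd x; x > max (lr c i) (shR c)\<rbrakk> \<Longrightarrow>
     trans n c (Step i) (c\<lparr>lr := (lr c)(i := x), pc := (pc c)(i := WWrA x)\<rparr>)"
| w_read_gt_B: "\<lbrakk>i < n; pc c i = WRd x; x > max (lr c i) (shR c)\<rbrakk> \<Longrightarrow>
     trans n c (Step i) (c\<lparr>lr := (lr c)(i := max (lr c i) (shR c)), pc := (pc c)(i := WWrB x)\<rparr>)"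
| w_read_le: "\<lbrakk>i < n; pc c i = WRd x; \<not> x > max (lr c i) (shR c)\<rbrakk> \<Longrightarrow>
     trans n c (Step i) (c\<lparr>lr := (lr c)(i := max (lr c i) (shR c)), pc := (pc c)(i := Done RTrue)\<rparr>)"
| w_write_A: "\<lbrakk>i < n; pc c i = WWrA x\<rbrakk> \<Longrightarrow>
     trans n c (Step i) (c\<lparr>shR := x, pc := (pc c)(i := Done RTrue)\<rparr>)"
| w_write_B: "\<lbrakk>i < n; pc c i = WWrB x\<rbrakk> \<Longrightarrow>
     trans n c (Step i) (c\<lparr>shR := x, lr := (lr c)(i := x), pc := (pc c)(i := Done RTrue)\<rparr>)"
| r_read: "\<lbrakk>i < n; pc c i = RRd\<rbrakk> \<Longrightarrow>
     trans n c (Step i) (c\<lparr>lr := (lr c)(i := max (lr c i) (shR c)),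
                           pc := (pc c)(i := Done (RVal (max (lr c i) (shR c))))\<rparr>)"
| ret: "\<lbrakk>i < n; pc c i = Done v\<rbrakk> \<Longrightarrow>
     trans n c (Return i v) (c\<lparr>pc := (pc c)(i := Idle)\<rparr>)"

inductive reach :: "nat \<Rightarrow> config \<Rightarrow> act list \<Rightarrow> bool" for n where
  reach_init: "reach n init []"
| reach_step: "\<lbrakk>reach n c tr; trans n c a c'\<rbrakk> \<Longrightarrow> reach n c' (tr @ [a])"

definition inf_exec :: "nat \<Rightarrow> (nat \<Rightarrow> config) \<Rightarrow> (nat \<Rightarrow> act) \<Rightarrow> bool" where
  "inf_exec n f g \<longleftrightarrow> f 0 = init \<and> (\<forall>k. trans n (f k) (g k) (f (Suc k)))"

definition ret_idx :: "act list \<Rightarrow> nat \<Rightarrow> nat option" where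
  "ret_idx tr k =
     (case filter (\<lambda>m. is_ret_of (act_proc (tr ! k)) (tr ! m)) [Suc k..<length tr] of
        [] \<Rightarrow> None | m # _ \<Rightarrow> Some m)"

fun rmr_legal :: "nat \<Rightarrow> (nat \<Rightarrow> nat) \<Rightarrow> (nat \<times> rop \<times> resp) list \<Rightarrow> bool" where
  "rmr_legal n s [] = True"
| "rmr_legal n s ((i, RMaxWrite x, v) # h) =
     (v = RTrue \<and> rmr_legal n (if x > s i then s(i := x) else s) h)"
| "rmr_legal n s ((i, RMaxRead, RVal y) # h) =
     (s i \<le> y \<and> y \<le> Max {s j |j. j < n} \<and> rmr_legal n (s(i := y)) h)"
| "rmr_legal n s ((i, RMaxRead, RTrue) # h) = False"

text \<open>MaxRegister (RMaxWrite read as MaxWrite, RMaxRead as MaxRead); m = largest value written so far.\<close>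
fun mr_legal :: "nat \<Rightarrow> (rop \<times> resp) list \<Rightarrow> bool" where
  "mr_legal m [] = True"
| "mr_legal m ((RMaxWrite x, RTrue) # h) = mr_legal (max m x) h"
| "mr_legal m ((RMaxRead, RVal y) # h) = (y = m \<and> mr_legal m h)"
| "mr_legal m ((RMaxWrite x, RVal y) # h) = False"
| "mr_legal m ((RMaxRead, RTrue) # h) = False"

text \<open>A history (trace) is linearizable w.r.t. RangeMaxRegister: there is a list L of
  distinct invocation positions with responses, containing every completed operation
  (with its actual response) and possibly some pending ones, respecting real-time
  order, which is a legal sequential RangeMaxRegister history.\<close>
definition linearizable :: "nat \<Rightarrow> act list \<Rightarrow> bool" where
  "linearizable n tr \<longleftrightarrow> (\<exists>L :: (nat \<times> resp) list.
     distinct (map fst L) \<and>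
     (\<forall>(k, v) \<in> set L. k < length tr \<and> is_inv (tr ! k) \<and>
         (\<forall>m. ret_idx tr k = Some m \<longrightarrow> v = ret_resp (tr ! m))) \<and>
     (\<forall>k m. k < length tr \<and> is_inv (tr ! k) \<and> ret_idx tr k = Some m \<longrightarrow> k \<in> fst ` set L) \<and>
     (\<forall>a b m. a < length L \<and> b < length L \<and> ret_idx tr (fst (L ! a)) = Some m \<and>
         m < fst (L ! b) \<longrightarrow> a < b) \<and>
     rmr_legal n (\<lambda>_. 1) (map (\<lambda>(k, v). (act_proc (tr ! k), inv_op (tr ! k), v)) L))"

definition alg_linearizable :: "nat \<Rightarrow> bool" where
  "alg_linearizable n \<longleftrightarrow> (\<forall>c tr. reach n c tr \<longrightarrow> linearizable n tr)"

definition sequential :: "act list \<Rightarrow> bool" where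
  "sequential tr \<longleftrightarrow> (\<forall>k1 k2. k1 < k2 \<and> k2 < length tr \<and> is_inv (tr ! k1) \<and> is_inv (tr ! k2) \<longrightarrow>
      (\<exists>m. ret_idx tr k1 = Some m \<and> m < k2))"

definition seq_hist :: "act list \<Rightarrow> (rop \<times> resp) list" where
  "seq_hist tr = [(inv_op (tr ! k), ret_resp (tr ! the (ret_idx tr k))).
                    k \<leftarrow> [0..<length tr], is_inv (tr ! k) \<and> ret_idx tr k \<noteq> None]"

definition sequentially_exact :: "nat \<Rightarrow> bool" where
  "sequentially_exact n \<longleftrightarrow> (\<forall>c tr. reach n c tr \<and> sequential tr \<longrightarrow> mr_legal 1 (seq_hist tr))"

definition wait_free :: "nat \<Rightarrow> bool" where
  "wait_free n \<longleftrightarrow> (\<forall>f g k i ov. inf_exec n f g \<and> g k = Invoke i ov \<and>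
      (\<forall>m. \<exists>m' > m. act_proc (g m') = i) \<longrightarrow> (\<exists>m > k. is_ret_of i (g m)))"

definition step_complexity_le :: "nat \<Rightarrow> nat \<Rightarrow> bool" where
  "step_complexity_le n C \<longleftrightarrow> (\<forall>c tr k i ov j. reach n c tr \<and> k < length tr \<and>
      tr ! k = Invoke i ov \<and> j \<le> length tr \<and>
      (\<forall>m. k < m \<and> m < j \<longrightarrow> \<not> is_ret_of i (tr ! m)) \<longrightarrow>
      card {m. k < m \<and> m < j \<and> tr ! m = Step i} \<le> C)"

end

theory Submission
  imports Defs
begin


lemma ret_idx_Some:
  assumes "ret_idx tr k = Some m"
  shows "k < m \<and> m < length tr \<and> is_ret_of (act_proc (tr ! k)) (tr ! m)"
proof -
  obtain xs where "filter (\<lambda>m. is_ret_of (act_proc (tr ! k)) (tr ! m)) [Suc k..<length tr] = m # xs"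
    using assms unfolding ret_idx_def by (auto split: list.splits)
  then have "m \<in> set (filter (\<lambda>m. is_ret_of (act_proc (tr ! k)) (tr ! m)) [Suc k..<length tr])"
    by simp
  then show ?thesis by auto
qed

lemma ret_idx_last: "ret_idx (tr @ [a]) (length tr) = None"
  unfolding ret_idx_def by simp

lemma ret_idx_snoc:
  assumes "k < length tr"
  shows "ret_idx (tr @ [a]) k = (case ret_idx tr k of Some m \<Rightarrow> Some m
     | None \<Rightarrow> if is_ret_of (act_proc (tr ! k)) a then Some (length tr) else None)"
proof -
  have u: "[Suc k..<length (tr @ [a])] = [Suc k..<length tr] @ [length tr]"
    using assms by simp
  have f: "filter (\<lambda>m. is_ret_of (act_proc ((tr @ [a]) ! k)) ((tr @ [a]) ! m)) [Suc k..<length tr]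
        = filter (\<lambda>m. is_ret_of (act_proc (tr ! k)) (tr ! m)) [Suc k..<length tr]"
    using assms by (intro filter_cong) (auto simp: nth_append)
  show ?thesis
    unfolding ret_idx_def u filter_append f using assms
    by (auto simp: nth_append split: list.splits)
qed

definition pend :: "act list \<Rightarrow> nat \<Rightarrow> bool" where
  "pend tr k \<longleftrightarrow> k < length tr \<and> is_inv (tr ! k) \<and> ret_idx tr k = None"

lemma pend_snoc:
  "pend (tr @ [a]) k \<longleftrightarrow> (k = length tr \<and> is_inv a) \<or>
     (pend tr k \<and> \<not> is_ret_of (act_proc (tr ! k)) a)"
  unfolding pend_def
  by (cases "k < length tr") (auto simp: ret_idx_snoc ret_idx_last nth_append split: option.splits)

lemma seq_hist_alt:
  "seq_hist tr = map (\<lambda>k. (inv_op (tr ! k), ret_resp (tr ! the (ret_idx tr k))))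
      (filter (\<lambda>k. is_inv (tr ! k) \<and> ret_idx tr k \<noteq> None) [0..<length tr])"
proof -
  have g: "\<And>xs. concat (map (\<lambda>k. if P k then [f k] else []) xs) = map f (filter P xs)" for P and f :: "nat \<Rightarrow> rop \<times> resp"
    by (induct_tac xs) auto
  show ?thesis unfolding seq_hist_def by (simp add: g)
qed

fun matches :: "rop \<Rightarrow> pcs \<Rightarrow> bool" where
  "matches (RMaxWrite x) p = (p = WRd x \<or> p = WWrA x \<or> p = WWrB x \<or> p = Done RTrue)"
| "matches RMaxRead p = (p = RRd \<or> (\<exists>y. p = Done (RVal y)))"

lemma matches_not_Idle: "matches ov p \<Longrightarrow> p \<noteq> Idle"
  by (cases ov) auto

definition J :: "config \<Rightarrow> act list \<Rightarrow> bool" where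
  "J c tr \<longleftrightarrow> (\<forall>k. pend tr k \<longrightarrow> matches (inv_op (tr ! k)) (pc c (act_proc (tr ! k))))
     \<and> (\<forall>i. pc c i \<noteq> Idle \<longrightarrow> (\<exists>k. pend tr k \<and> act_proc (tr ! k) = i))
     \<and> (\<forall>k1 k2. pend tr k1 \<and> pend tr k2 \<and> act_proc (tr ! k1) = act_proc (tr ! k2) \<longrightarrow> k1 = k2)"

lemma pend_lt: "pend tr k \<Longrightarrow> k < length tr"
  by (simp add: pend_def)

lemma J_step:
  assumes "J c tr" "pc c' = (pc c)(i := p')" "pc c i \<noteq> Idle"
    "\<And>ov. matches ov (pc c i) \<Longrightarrow> matches ov p'"
  shows "J c' (tr @ [Step i])"
proof -
  have pe: "pend (tr @ [Step i]) k = pend tr k" for k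
    by (simp add: pend_snoc)
  have nth: "pend tr k \<Longrightarrow> (tr @ [Step i]) ! k = tr ! k" for k
    by (simp add: nth_append pend_lt)
  show ?thesis using assms(1) unfolding J_def pe
    using assms(2-4) matches_not_Idle
    by (smt (verit, del_insts) fun_upd_apply nth)
qed

lemma J_invoke:
  assumes "J c tr" "pc c' = (pc c)(i := start ov)" "pc c i = Idle"
  shows "J c' (tr @ [Invoke i ov])"
proof -
  have pe: "pend (tr @ [Invoke i ov]) k = (k = length tr \<or> pend tr k)" for k
    by (simp add: pend_snoc)
  have nth: "pend tr k \<Longrightarrow> (tr @ [Invoke i ov]) ! k = tr ! k" for k
    by (simp add: nth_append pend_lt)
  have ms: "matches ov (start ov)" by (cases ov) auto
  have ni: "pend tr k \<Longrightarrow> act_proc (tr ! k) \<noteq> i" for k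
    using assms(1,3) matches_not_Idle unfolding J_def by metis
  show ?thesis using assms(1) unfolding J_def pe
    using assms(2) ms ni nth
    by (smt (verit) act_proc.simps(1) fun_upd_apply inv_op.simps(1) nth_append_length)
qed

lemma J_ret:
  assumes "J c tr" "pc c' = (pc c)(i := Idle)"
  shows "J c' (tr @ [Return i v])"
proof -
  have pe: "pend (tr @ [Return i v]) k = (pend tr k \<and> act_proc (tr ! k) \<noteq> i)" for k
    by (auto simp add: pend_snoc)
  have nth: "pend tr k \<Longrightarrow> (tr @ [Return i v]) ! k = tr ! k" for k
    by (simp add: nth_append pend_lt)
  show ?thesis using assms(1) unfolding J_def pe
    using assms(2) nth
    by (smt (verit) fun_upd_apply)
qed

lemma reach_J: "reach n c tr \<Longrightarrow> J c tr"
proof (induction rule: reach.induct)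
  case reach_init
  then show ?case by (simp add: J_def init_def pend_def)
next
  case (reach_step c tr a c')
  from reach_step.hyps(2) show ?case
  proof cases
    case (invoke i ov) then show ?thesis using J_invoke[OF reach_step.IH] by simp
  next
    case (w_read_gt_A i x) then show ?thesis
      unfolding w_read_gt_A(1) by (intro J_step[OF reach_step.IH, where p'="WWrA x"]) (auto elim: matches.elims)
  next
    case (w_read_gt_B i x) then show ?thesis
      unfolding w_read_gt_B(1) by (intro J_step[OF reach_step.IH, where p'="WWrB x"]) (auto elim: matches.elims)
  next
    case (w_read_le i x) then show ?thesis
      unfolding w_read_le(1) by (intro J_step[OF reach_step.IH, where p'="Done RTrue"]) (auto elim: matches.elims)
  next
    case (w_write_A i x) then show ?thesis
      unfolding w_write_A(1) by (intro J_step[OF reach_step.IH, where p'="Done RTrue"]) (auto elim: matches.elims)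
  next
    case (w_write_B i x) then show ?thesis
      unfolding w_write_B(1) by (intro J_step[OF reach_step.IH, where p'="Done RTrue"]) (auto elim: matches.elims)
  next
    case (r_read i) then show ?thesis
      unfolding r_read(1) by (intro J_step[OF reach_step.IH, where p'="Done (RVal (max (lr c i) (shR c)))"]) (auto elim: matches.elims)
  next
    case (ret i v) then show ?thesis using J_ret[OF reach_step.IH] by simp
  qed
qed



definition H :: "act list \<Rightarrow> (nat \<times> resp) list \<Rightarrow> (nat \<times> rop \<times> resp) list" where
  "H tr L = map (\<lambda>(k, v). (act_proc (tr ! k), inv_op (tr ! k), v)) L"

definition TP :: "config \<Rightarrow> act list \<Rightarrow> (nat \<times> resp) list \<Rightarrow> bool" where
  "TP c tr L \<longleftrightarrow> distinct (map fst L) \<and>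
     (\<forall>(k, v) \<in> set L. k < length tr \<and> is_inv (tr ! k) \<and>
         (\<forall>m. ret_idx tr k = Some m \<longrightarrow> v = ret_resp (tr ! m))) \<and>
     (\<forall>k m. k < length tr \<and> is_inv (tr ! k) \<and> ret_idx tr k = Some m \<longrightarrow> k \<in> fst ` set L) \<and>
     (\<forall>a b m. a < length L \<and> b < length L \<and> ret_idx tr (fst (L ! a)) = Some m \<and>
         m < fst (L ! b) \<longrightarrow> a < b) \<and>
     (\<forall>k. pend tr k \<longrightarrow> (k \<in> fst ` set L \<longleftrightarrow> (\<exists>v. pc c (act_proc (tr ! k)) = Done v))) \<and>
     (\<forall>k v. (k, v) \<in> set L \<and> ret_idx tr k = None \<longrightarrow> pc c (act_proc (tr ! k)) = Done v)"

lemma TP_D: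
  assumes "TP c tr L"
  shows "distinct (map fst L)" and
    "\<And>k v. (k, v) \<in> set L \<Longrightarrow> k < length tr \<and> is_inv (tr ! k) \<and>
         (\<forall>m. ret_idx tr k = Some m \<longrightarrow> v = ret_resp (tr ! m))" and
    "\<And>k m. k < length tr \<Longrightarrow> is_inv (tr ! k) \<Longrightarrow> ret_idx tr k = Some m \<Longrightarrow> k \<in> fst ` set L" and
    "\<And>a b m. a < length L \<Longrightarrow> b < length L \<Longrightarrow> ret_idx tr (fst (L ! a)) = Some m \<Longrightarrow>
         m < fst (L ! b) \<Longrightarrow> a < b" and
    "\<And>k. pend tr k \<Longrightarrow> (k \<in> fst ` set L \<longleftrightarrow> (\<exists>v. pc c (act_proc (tr ! k)) = Done v))" and
    "\<And>k v. (k, v) \<in> set L \<Longrightarrow> ret_idx tr k = None \<Longrightarrow> pc c (act_proc (tr ! k)) = Done v"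
proof -
  note a = assms[unfolded TP_def]
  show "distinct (map fst L)" using a by (rule conjunct1)
  note c2 = a[THEN conjunct2, THEN conjunct1]
  note c3 = a[THEN conjunct2, THEN conjunct2, THEN conjunct1]
  note c4 = a[THEN conjunct2, THEN conjunct2, THEN conjunct2, THEN conjunct1]
  note c6 = a[THEN conjunct2, THEN conjunct2, THEN conjunct2, THEN conjunct2, THEN conjunct1]
  note c7 = a[THEN conjunct2, THEN conjunct2, THEN conjunct2, THEN conjunct2, THEN conjunct2]
  show "\<And>k v. (k, v) \<in> set L \<Longrightarrow> k < length tr \<and> is_inv (tr ! k) \<and>
         (\<forall>m. ret_idx tr k = Some m \<longrightarrow> v = ret_resp (tr ! m))"
    using c2 by (auto dest!: bspec)
  show "\<And>k m. k < length tr \<Longrightarrow> is_inv (tr ! k) \<Longrightarrow> ret_idx tr k = Some m \<Longrightarrow> k \<in> fst ` set L"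
    using c3 by blast
  show "\<And>a b m. a < length L \<Longrightarrow> b < length L \<Longrightarrow> ret_idx tr (fst (L ! a)) = Some m \<Longrightarrow>
         m < fst (L ! b) \<Longrightarrow> a < b" using c4 by blast
  show "\<And>k. pend tr k \<Longrightarrow> (k \<in> fst ` set L \<longleftrightarrow> (\<exists>v. pc c (act_proc (tr ! k)) = Done v))"
    using c6 by blast
  show "\<And>k v. (k, v) \<in> set L \<Longrightarrow> ret_idx tr k = None \<Longrightarrow> pc c (act_proc (tr ! k)) = Done v"
    using c7 by blast
qed

lemma TP_lt: "TP c tr L \<Longrightarrow> x \<in> set L \<Longrightarrow> fst x < length tr"
  using TP_D(2) by (cases x) fastforce

lemma H_snoc: "TP c tr L \<Longrightarrow> H (tr @ [a]) L = H tr L"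
  unfolding H_def by (rule map_cong) (auto dest!: TP_lt simp: nth_append)

lemma TP_ret:
  assumes tp: "TP c tr L" and j: "J c tr" and p: "pc c i = Done v" and p': "pc c' = (pc c)(i := Idle)"
  shows "TP c' (tr @ [Return i v]) L"
proof -
  let ?t = "tr @ [Return i v]"
  have nth: "k < length tr \<Longrightarrow> ?t ! k = tr ! k" for k by (simp add: nth_append)
  have ri: "k < length tr \<Longrightarrow> ret_idx ?t k = (case ret_idx tr k of Some m \<Rightarrow> Some m
     | None \<Rightarrow> if act_proc (tr ! k) = i then Some (length tr) else None)" for k
    using ret_idx_snoc[of k tr "Return i v"] by (cases "tr ! k") auto
  have pe: "pend ?t k = (pend tr k \<and> act_proc (tr ! k) \<noteq> i)" for k
    by (auto simp add: pend_snoc)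
  note d = TP_D(1)[OF tp] and c2 = TP_D(2)[OF tp] and c3 = TP_D(3)[OF tp] and c4 = TP_D(4)[OF tp]
    and c6 = TP_D(5)[OF tp] and c7 = TP_D(6)[OF tp]
  have n2: "(k, w) \<in> set L \<Longrightarrow> k < length ?t \<and> is_inv (?t ! k) \<and>
         (\<forall>m. ret_idx ?t k = Some m \<longrightarrow> w = ret_resp (?t ! m))" for k w
  proof -
    assume kw: "(k, w) \<in> set L"
    with c2 have k: "k < length tr" "is_inv (tr ! k)" by auto
    show ?thesis
    proof (cases "ret_idx tr k")
      case None
      then show ?thesis using k kw c7[OF kw] p by (auto simp: ri nth dest: ret_idx_Some)
    next
      case (Some m)
      then show ?thesis using k kw c2[OF kw] ret_idx_Some[OF Some] by (auto simp: ri nth_append)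
    qed
  qed
  have n3: "k < length ?t \<Longrightarrow> is_inv (?t ! k) \<Longrightarrow> ret_idx ?t k = Some m \<Longrightarrow> k \<in> fst ` set L" for k m
  proof -
    assume a: "k < length ?t" "is_inv (?t ! k)" "ret_idx ?t k = Some m"
    then have k: "k < length tr" by (auto simp: nth_append split: if_splits)
    show ?thesis
    proof (cases "ret_idx tr k")
      case None
      then have "act_proc (tr ! k) = i" using a k by (auto simp: ri split: if_splits)
      moreover have "pend tr k" using None a k by (simp add: pend_def nth)
      ultimately show ?thesis using c6 p by auto
    next
      case (Some m')
      then show ?thesis using a k c3 by (auto simp: nth)
    qed
  qed
  have n4: "a < length L \<Longrightarrow> b < length L \<Longrightarrow> ret_idx ?t (fst (L ! a)) = Some m \<Longrightarrow>
         m < fst (L ! b) \<Longrightarrow> a < b" for a b m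
  proof -
    assume a: "a < length L" "b < length L" "ret_idx ?t (fst (L ! a)) = Some m" "m < fst (L ! b)"
    have la: "fst (L ! a) < length tr" "fst (L ! b) < length tr"
      using a(1,2) c2 by (metis nth_mem prod.collapse)+
    show ?thesis
    proof (cases "ret_idx tr (fst (L ! a))")
      case None
      then show ?thesis using a la by (auto simp: ri split: if_splits)
    next
      case (Some m')
      then show ?thesis using a la c4 by (auto simp: ri)
    qed
  qed
  have n6: "pend ?t k \<Longrightarrow> (k \<in> fst ` set L \<longleftrightarrow> (\<exists>v. pc c' (act_proc (?t ! k)) = Done v))" for k
  proof -
    assume "pend ?t k"
    then have a: "pend tr k" "act_proc (tr ! k) \<noteq> i" by (auto simp: pe)
    then have "?t ! k = tr ! k" "pc c' (act_proc (tr ! k)) = pc c (act_proc (tr ! k))"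
      using p' by (auto simp: nth pend_lt)
    then show ?thesis using c6[OF a(1)] by simp
  qed
  have n7: "(k, w) \<in> set L \<Longrightarrow> ret_idx ?t k = None \<Longrightarrow> pc c' (act_proc (?t ! k)) = Done w" for k w
  proof -
    assume a: "(k, w) \<in> set L" "ret_idx ?t k = None"
    have k: "k < length tr" using a c2 by auto
    then show ?thesis using a c7 p' by (auto simp: ri nth split: option.splits if_splits)
  qed
  show ?thesis unfolding TP_def
    apply (intro conjI)
    subgoal by (rule d)
    subgoal using n2 by blast
    subgoal using n3 by blast
    subgoal using n4 by blast
    subgoal using n6 by blast
    subgoal using n7 by blast
    done
qed


lemma TP_invoke:
  assumes tp: "TP c tr L" and j: "J c tr" and p: "pc c i = Idle" and p': "pc c' = (pc c)(i := start ov)"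
  shows "TP c' (tr @ [Invoke i ov]) L"
proof -
  let ?t = "tr @ [Invoke i ov]"
  have nth: "k < length tr \<Longrightarrow> ?t ! k = tr ! k" for k by (simp add: nth_append)
  have ri: "k < length tr \<Longrightarrow> ret_idx ?t k = ret_idx tr k" for k
    using ret_idx_snoc[of k tr "Invoke i ov"] by (auto split: option.splits)
  have rl: "ret_idx ?t (length tr) = None" by (rule ret_idx_last)
  have pe: "pend ?t k = (k = length tr \<or> pend tr k)" for k
    by (auto simp add: pend_snoc)
  note d = TP_D(1)[OF tp] and c2 = TP_D(2)[OF tp] and c3 = TP_D(3)[OF tp] and c4 = TP_D(4)[OF tp]
    and c6 = TP_D(5)[OF tp] and c7 = TP_D(6)[OF tp]
  have pni: "pend tr k \<Longrightarrow> act_proc (tr ! k) \<noteq> i" for k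
    using j p matches_not_Idle unfolding J_def by metis
  have sni: "start ov \<noteq> Done w" for w by (cases ov) auto
  have n2: "(k, w) \<in> set L \<Longrightarrow> k < length ?t \<and> is_inv (?t ! k) \<and>
         (\<forall>m. ret_idx ?t k = Some m \<longrightarrow> w = ret_resp (?t ! m))" for k w
  proof -
    assume kw: "(k, w) \<in> set L"
    with c2 have k: "k < length tr" by auto
    show ?thesis using c2[OF kw] k ret_idx_Some[of tr k] by (auto simp: ri nth)
  qed
  have n3: "k < length ?t \<Longrightarrow> is_inv (?t ! k) \<Longrightarrow> ret_idx ?t k = Some m \<Longrightarrow> k \<in> fst ` set L" for k m
  proof -
    assume a: "k < length ?t" "is_inv (?t ! k)" "ret_idx ?t k = Some m"
    then have k: "k < length tr" using rl by (cases "k = length tr") auto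
    show ?thesis using a k c3 by (auto simp: nth ri)
  qed
  have n4: "a < length L \<Longrightarrow> b < length L \<Longrightarrow> ret_idx ?t (fst (L ! a)) = Some m \<Longrightarrow>
         m < fst (L ! b) \<Longrightarrow> a < b" for a b m
  proof -
    assume a: "a < length L" "b < length L" "ret_idx ?t (fst (L ! a)) = Some m" "m < fst (L ! b)"
    have la: "fst (L ! a) < length tr"
      using a(1) by (meson TP_lt nth_mem tp)
    show ?thesis using a la c4 by (auto simp: ri)
  qed
  have n6: "pend ?t k \<Longrightarrow> (k \<in> fst ` set L \<longleftrightarrow> (\<exists>v. pc c' (act_proc (?t ! k)) = Done v))" for k
  proof -
    assume "pend ?t k"
    then consider "k = length tr" | "pend tr k" by (auto simp: pe)
    then show ?thesis
    proof cases
      case 1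
      then have "k \<notin> fst ` set L" using TP_lt[OF tp] by force
      then show ?thesis using 1 p' sni by simp
    next
      case 2
      then have "?t ! k = tr ! k" "pc c' (act_proc (tr ! k)) = pc c (act_proc (tr ! k))"
        using p' pni by (auto simp: nth pend_lt)
      then show ?thesis using c6[OF 2] by simp
    qed
  qed
  have n7: "(k, w) \<in> set L \<Longrightarrow> ret_idx ?t k = None \<Longrightarrow> pc c' (act_proc (?t ! k)) = Done w" for k w
  proof -
    assume a: "(k, w) \<in> set L" "ret_idx ?t k = None"
    have k: "k < length tr" using a c2 by auto
    then have "pc c (act_proc (tr ! k)) = Done w" using a c7 by (simp add: ri)
    then show ?thesis using p p' k by (auto simp: nth)
  qed
  show ?thesis unfolding TP_def
    apply (intro conjI)
    subgoal by (rule d)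
    subgoal using n2 by blast
    subgoal using n3 by blast
    subgoal using n4 by blast
    subgoal using n6 by blast
    subgoal using n7 by blast
    done
qed

lemma TP_nolin:
  assumes tp: "TP c tr L" and p: "\<And>w. pc c i \<noteq> Done w" and p': "pc c' = (pc c)(i := q)"
    and q: "\<And>w. q \<noteq> Done w"
  shows "TP c' (tr @ [Step i]) L"
proof -
  let ?t = "tr @ [Step i]"
  have nth: "k < length tr \<Longrightarrow> ?t ! k = tr ! k" for k by (simp add: nth_append)
  have ri: "k < length tr \<Longrightarrow> ret_idx ?t k = ret_idx tr k" for k
    using ret_idx_snoc[of k tr "Step i"] by (auto split: option.splits)
  have rl: "ret_idx ?t (length tr) = None" by (rule ret_idx_last)
  have pe: "pend ?t k = pend tr k" for k
    by (auto simp add: pend_snoc)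
  note d = TP_D(1)[OF tp] and c2 = TP_D(2)[OF tp] and c3 = TP_D(3)[OF tp] and c4 = TP_D(4)[OF tp]
    and c6 = TP_D(5)[OF tp] and c7 = TP_D(6)[OF tp]
  have n2: "(k, w) \<in> set L \<Longrightarrow> k < length ?t \<and> is_inv (?t ! k) \<and>
         (\<forall>m. ret_idx ?t k = Some m \<longrightarrow> w = ret_resp (?t ! m))" for k w
  proof -
    assume kw: "(k, w) \<in> set L"
    with c2 have k: "k < length tr" by auto
    show ?thesis using c2[OF kw] k ret_idx_Some[of tr k] by (auto simp: ri nth)
  qed
  have n3: "k < length ?t \<Longrightarrow> is_inv (?t ! k) \<Longrightarrow> ret_idx ?t k = Some m \<Longrightarrow> k \<in> fst ` set L" for k m
  proof -
    assume a: "k < length ?t" "is_inv (?t ! k)" "ret_idx ?t k = Some m"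
    then have k: "k < length tr" using rl by (cases "k = length tr") auto
    show ?thesis using a k c3 by (auto simp: nth ri)
  qed
  have n4: "a < length L \<Longrightarrow> b < length L \<Longrightarrow> ret_idx ?t (fst (L ! a)) = Some m \<Longrightarrow>
         m < fst (L ! b) \<Longrightarrow> a < b" for a b m
  proof -
    assume a: "a < length L" "b < length L" "ret_idx ?t (fst (L ! a)) = Some m" "m < fst (L ! b)"
    have la: "fst (L ! a) < length tr"
      using a(1) by (meson TP_lt nth_mem tp)
    show ?thesis using a la c4 by (auto simp: ri)
  qed
  have n6: "pend ?t k \<Longrightarrow> (k \<in> fst ` set L \<longleftrightarrow> (\<exists>v. pc c' (act_proc (?t ! k)) = Done v))" for k
  proof -
    assume "pend ?t k"
    then have 2: "pend tr k" by (simp add: pe)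
    then have e: "?t ! k = tr ! k" by (simp add: nth pend_lt)
    show ?thesis
    proof (cases "act_proc (tr ! k) = i")
      case True
      then show ?thesis using c6[OF 2] e p p' q by auto
    next
      case False
      then show ?thesis using c6[OF 2] e p' by auto
    qed
  qed
  have n7: "(k, w) \<in> set L \<Longrightarrow> ret_idx ?t k = None \<Longrightarrow> pc c' (act_proc (?t ! k)) = Done w" for k w
  proof -
    assume a: "(k, w) \<in> set L" "ret_idx ?t k = None"
    have k: "k < length tr" using a c2 by auto
    then have "pc c (act_proc (tr ! k)) = Done w" using a c7 by (simp add: ri)
    then show ?thesis using p p' k by (auto simp: nth)
  qed
  show ?thesis unfolding TP_def
    apply (intro conjI)
    subgoal by (rule d)
    subgoal using n2 by blast
    subgoal using n3 by blast
    subgoal using n4 by blast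
    subgoal using n6 by blast
    subgoal using n7 by blast
    done
qed

lemma TP_lin:
  assumes tp: "TP c tr L" and j: "J c tr" and k0: "pend tr k0" "act_proc (tr ! k0) = i"
    and p: "\<And>w. pc c i \<noteq> Done w" and p': "pc c' = (pc c)(i := Done v)"
  shows "TP c' (tr @ [Step i]) (L @ [(k0, v)])"
proof -
  let ?t = "tr @ [Step i]"
  let ?L = "L @ [(k0, v)]"
  have nth: "k < length tr \<Longrightarrow> ?t ! k = tr ! k" for k by (simp add: nth_append)
  have ri: "k < length tr \<Longrightarrow> ret_idx ?t k = ret_idx tr k" for k
    using ret_idx_snoc[of k tr "Step i"] by (auto split: option.splits)
  have rl: "ret_idx ?t (length tr) = None" by (rule ret_idx_last)
  have pe: "pend ?t k = pend tr k" for k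
    by (auto simp add: pend_snoc)
  note d = TP_D(1)[OF tp] and c2 = TP_D(2)[OF tp] and c3 = TP_D(3)[OF tp] and c4 = TP_D(4)[OF tp]
    and c6 = TP_D(5)[OF tp] and c7 = TP_D(6)[OF tp]
  have k0L: "k0 \<notin> fst ` set L" using c6[OF k0(1)] k0(2) p by auto
  have k0l: "k0 < length tr" "is_inv (tr ! k0)" "ret_idx tr k0 = None" using k0(1) by (auto simp: pend_def)
  have uniq: "pend tr k \<Longrightarrow> act_proc (tr ! k) = i \<Longrightarrow> k = k0" for k
    using j k0 unfolding J_def by metis
  have n1: "distinct (map fst ?L)" using d k0L by simp
  have n2: "(k, w) \<in> set ?L \<Longrightarrow> k < length ?t \<and> is_inv (?t ! k) \<and>
         (\<forall>m. ret_idx ?t k = Some m \<longrightarrow> w = ret_resp (?t ! m))" for k w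
  proof -
    assume kw: "(k, w) \<in> set ?L"
    then consider "(k, w) \<in> set L" | "k = k0" "w = v" by auto
    then show ?thesis
    proof cases
      case 1
      with c2 have k: "k < length tr" by auto
      show ?thesis using c2[OF 1] k ret_idx_Some[of tr k] by (auto simp: ri nth)
    next
      case 2
      then show ?thesis using k0l by (simp add: ri nth)
    qed
  qed
  have n3: "k < length ?t \<Longrightarrow> is_inv (?t ! k) \<Longrightarrow> ret_idx ?t k = Some m \<Longrightarrow> k \<in> fst ` set ?L" for k m
  proof -
    assume a: "k < length ?t" "is_inv (?t ! k)" "ret_idx ?t k = Some m"
    then have k: "k < length tr" using rl by (cases "k = length tr") auto
    show ?thesis using a k c3 by (auto simp: nth ri)
  qed
  have n4: "a < length ?L \<Longrightarrow> b < length ?L \<Longrightarrow> ret_idx ?t (fst (?L ! a)) = Some m \<Longrightarrow>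
         m < fst (?L ! b) \<Longrightarrow> a < b" for a b m
  proof -
    assume a: "a < length ?L" "b < length ?L" "ret_idx ?t (fst (?L ! a)) = Some m" "m < fst (?L ! b)"
    show ?thesis
    proof (cases "a < length L")
      case True
      have la: "fst (L ! a) < length tr"
        using True by (meson TP_lt nth_mem tp)
      show ?thesis
      proof (cases "b < length L")
        case True
        then show ?thesis using a la c4 \<open>a < length L\<close> by (auto simp: ri nth_append)
      next
        case False
        then show ?thesis using a \<open>a < length L\<close> by simp
      qed
    next
      case False
      then have "a = length L" using a(1) by simp
      then show ?thesis using a(3) k0l by (simp add: ri)
    qed
  qed
  have n6: "pend ?t k \<Longrightarrow> (k \<in> fst ` set ?L \<longleftrightarrow> (\<exists>v. pc c' (act_proc (?t ! k)) = Done v))" for k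
  proof -
    assume "pend ?t k"
    then have 2: "pend tr k" by (simp add: pe)
    then have e: "?t ! k = tr ! k" by (simp add: nth pend_lt)
    show ?thesis
    proof (cases "act_proc (tr ! k) = i")
      case True
      then have "k = k0" using uniq 2 by simp
      then show ?thesis using e p' True by auto
    next
      case False
      then have "k \<noteq> k0" using k0 by auto
      then show ?thesis using c6[OF 2] e p' False by auto
    qed
  qed
  have n7: "(k, w) \<in> set ?L \<Longrightarrow> ret_idx ?t k = None \<Longrightarrow> pc c' (act_proc (?t ! k)) = Done w" for k w
  proof -
    assume a: "(k, w) \<in> set ?L" "ret_idx ?t k = None"
    then consider "(k, w) \<in> set L" | "k = k0" "w = v" by auto
    then show ?thesis
    proof cases
      case 1
      have k: "k < length tr" using 1 c2 by auto
      then have "pc c (act_proc (tr ! k)) = Done w" using a 1 c7 by (simp add: ri)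
      then show ?thesis using p p' k by (auto simp: nth)
    next
      case 2
      then show ?thesis using p' k0 k0l by (simp add: nth)
    qed
  qed
  show ?thesis unfolding TP_def
    apply (intro conjI)
    subgoal by (rule n1)
    subgoal using n2 by blast
    subgoal using n3 by blast
    subgoal using n4 by blast
    subgoal using n6 by blast
    subgoal using n7 by blast
    done
qed



fun rmr_st :: "(nat \<Rightarrow> nat) \<Rightarrow> (nat \<times> rop \<times> resp) list \<Rightarrow> (nat \<Rightarrow> nat)" where
  "rmr_st s [] = s"
| "rmr_st s ((i, RMaxWrite x, v) # h) = rmr_st (if x > s i then s(i := x) else s) h"
| "rmr_st s ((i, RMaxRead, RVal y) # h) = rmr_st (s(i := y)) h"
| "rmr_st s ((i, RMaxRead, RTrue) # h) = rmr_st s h"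

lemma rmr_snoc:
  "rmr_legal n s (h @ [e]) = (rmr_legal n s h \<and> rmr_legal n (rmr_st s h) [e]) \<and>
   rmr_st s (h @ [e]) = rmr_st (rmr_st s h) [e]"
proof (induction h arbitrary: s)
  case Nil
  then show ?case by simp
next
  case (Cons a h)
  obtain i ov v where a: "a = (i, ov, v)" by (cases a) auto
  show ?case
  proof (cases ov)
    case (RMaxWrite x)
    then show ?thesis using Cons.IH by (simp add: a)
  next
    case RMaxRead
    then show ?thesis using Cons.IH by (cases v) (simp_all add: a fun_upd_def)
  qed
qed

lemma le_Max_s: "(j::nat) < n \<Longrightarrow> y \<le> s j \<Longrightarrow> y \<le> Max {s j |j. j < n}"
proof -
  assume a: "j < n" "y \<le> s j"
  have e: "{s j |j. j < n} = s ` {..<n}" by auto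
  have "finite (s ` {..<n})" by (rule finite_imageI) simp
  then have f: "finite {s j |j. j < n}" by (simp only: e)
  have "s j \<in> {s j |j. j < n}" using a(1) by blast
  then have "s j \<le> Max {s j |j. j < n}" by (rule Max_ge[OF f])
  then show ?thesis using a(2) by (rule order.trans[rotated])
qed

definition AB :: "nat \<Rightarrow> config \<Rightarrow> (nat \<Rightarrow> nat) \<Rightarrow> bool" where
  "AB n c s \<longleftrightarrow> (\<forall>i x. pc c i = WWrA x \<longrightarrow> lr c i = x) \<and> (\<forall>i x. pc c i = WWrB x \<longrightarrow> lr c i < x)
    \<and> (\<forall>i. (\<forall>x. pc c i \<noteq> WWrA x) \<longrightarrow> (\<exists>j<n. lr c i \<le> s j)) \<and> (\<exists>j<n. shR c \<le> s j)
    \<and> (\<forall>i. s i \<le> lr c i)"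

lemma H_lin:
  assumes "TP c tr L" "k0 < length tr"
  shows "H (tr @ [a]) (L @ [(k0, v)]) = H tr L @ [(act_proc (tr ! k0), inv_op (tr ! k0), v)]"
proof -
  have "H (tr @ [a]) (L @ [(k0, v)]) = H (tr @ [a]) L @ H (tr @ [a]) [(k0, v)]"
    by (simp add: H_def)
  then show ?thesis using H_snoc[OF assms(1)] assms(2) by (simp add: H_def nth_append)
qed

definition Inv :: "nat \<Rightarrow> config \<Rightarrow> act list \<Rightarrow> (nat \<times> resp) list \<Rightarrow> bool" where
  "Inv n c tr L \<longleftrightarrow> TP c tr L \<and> rmr_legal n (\<lambda>_. 1) (H tr L) \<and> AB n c (rmr_st (\<lambda>_. 1) (H tr L))"

lemma lin_step:
  assumes inv: "Inv n c tr L" and j: "J c tr" and ni: "pc c i \<noteq> Idle"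
    and p: "\<And>w. pc c i \<noteq> Done w" and p': "pc c' = (pc c)(i := Done v)"
    and h: "\<And>ov. matches ov (pc c i) \<Longrightarrow>
       rmr_legal n (rmr_st (\<lambda>_. 1) (H tr L)) [(i, ov, v)] \<and>
       AB n c' (rmr_st (rmr_st (\<lambda>_. 1) (H tr L)) [(i, ov, v)])"
  shows "\<exists>L'. Inv n c' (tr @ [Step i]) L'"
proof -
  obtain k0 where k0: "pend tr k0" "act_proc (tr ! k0) = i"
    using j ni unfolding J_def by blast
  have m: "matches (inv_op (tr ! k0)) (pc c i)" using j k0 unfolding J_def by blast
  have tp: "TP c tr L" using inv by (simp add: Inv_def)
  have "TP c' (tr @ [Step i]) (L @ [(k0, v)])" by (rule TP_lin[OF tp j k0 p p'])
  moreover have "H (tr @ [Step i]) (L @ [(k0, v)]) = H tr L @ [(i, inv_op (tr ! k0), v)]"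
    using H_lin[OF tp] k0 pend_lt by metis
  moreover note h[OF m] inv
  ultimately show ?thesis unfolding Inv_def using rmr_snoc k0(2)
    by (metis (no_types, lifting))
qed

lemma nolin_step:
  assumes inv: "Inv n c tr L" and p: "\<And>w. pc c i \<noteq> Done w" and p': "pc c' = (pc c)(i := q)"
    and q: "\<And>w. q \<noteq> Done w" and ab: "AB n c' (rmr_st (\<lambda>_. 1) (H tr L))"
  shows "\<exists>L'. Inv n c' (tr @ [Step i]) L'"
proof -
  have tp: "TP c tr L" using inv by (simp add: Inv_def)
  show ?thesis using TP_nolin[OF tp p p' q] H_snoc[OF tp] inv ab unfolding Inv_def by metis
qed

lemma AB_pc:
  assumes "AB n c s" "lr c' = lr c" "shR c' = shR c" "pc c' = (pc c)(i := q)"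
    "\<And>x. q \<noteq> WWrA x" "\<And>x. q \<noteq> WWrB x" "\<And>x. pc c i \<noteq> WWrA x"
  shows "AB n c' s"
  using assms unfolding AB_def by (metis fun_upd_apply)

lemma AB_D:
  assumes "AB n c s"
  shows "\<And>j y. pc c j = WWrA y \<Longrightarrow> lr c j = y"
    "\<And>j y. pc c j = WWrB y \<Longrightarrow> lr c j < y"
    "\<And>j. (\<And>y. pc c j \<noteq> WWrA y) \<Longrightarrow> \<exists>k<n. lr c j \<le> s k"
    "\<exists>k<n. shR c \<le> s k"
    "\<And>j. s j \<le> lr c j"
  using assms unfolding AB_def by blast+

lemma AB_I:
  assumes "\<And>j y. pc c j = WWrA y \<Longrightarrow> lr c j = y"
    "\<And>j y. pc c j = WWrB y \<Longrightarrow> lr c j < y"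
    "\<And>j. (\<And>y. pc c j \<noteq> WWrA y) \<Longrightarrow> \<exists>k<n. lr c j \<le> s k"
    "\<exists>k<n. shR c \<le> s k"
    "\<And>j. s j \<le> lr c j"
  shows "AB n c s"
  using assms unfolding AB_def by blast

lemma rmr_st_write: "rmr_st s [(i, RMaxWrite x, v)] = s(i := max (s i) x)"
  by (auto simp: fun_eq_iff max_def)

lemma ex_mono: "(s::nat\<Rightarrow>nat) t \<le> b \<Longrightarrow> \<exists>k<n. (a::nat) \<le> s k \<Longrightarrow> \<exists>k<n. a \<le> (s(t := b)) k"
  by (metis fun_upd_apply order.trans)

lemma AB_gtA:
  assumes ab: "AB n c s" and p: "pc c i = WRd x" "x > max (lr c i) (shR c)"
    and c': "c' = c\<lparr>lr := (lr c)(i := x), pc := (pc c)(i := WWrA x)\<rparr>"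
  shows "AB n c' s"
proof (rule AB_I)
  note a = AB_D[OF ab]
  show "lr c' j = y" if "pc c' j = WWrA y" for j y using a(1)[of j y] that c' by (cases "j = i") auto
  show "lr c' j < y" if "pc c' j = WWrB y" for j y using a(2)[of j y] that c' by (cases "j = i") auto
  show "\<exists>k<n. lr c' j \<le> s k" if "\<And>y. pc c' j \<noteq> WWrA y" for j
    using a(3)[of j] that[of x] that c' by (cases "j = i") auto
  show "\<exists>k<n. shR c' \<le> s k" using a(4) c' by auto
  show "s j \<le> lr c' j" for j using a(5)[of j] c' p by (cases "j = i") auto
qed

lemma AB_gtB:
  assumes ab: "AB n c s" and p: "pc c i = WRd x" "x > max (lr c i) (shR c)"
    and c': "c' = c\<lparr>lr := (lr c)(i := max (lr c i) (shR c)), pc := (pc c)(i := WWrB x)\<rparr>"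
  shows "AB n c' s"
proof (rule AB_I)
  note a = AB_D[OF ab]
  have l: "\<exists>k<n. lr c i \<le> s k" using a(3) p by auto
  show "lr c' j = y" if "pc c' j = WWrA y" for j y using a(1)[of j y] that c' by (cases "j = i") auto
  show "lr c' j < y" if "pc c' j = WWrB y" for j y using a(2)[of j y] that c' p by (cases "j = i") auto
  show "\<exists>k<n. lr c' j \<le> s k" if "\<And>y. pc c' j \<noteq> WWrA y" for j
  proof (cases "j = i")
    case True
    then show ?thesis using l a(4) c' by (auto simp: max_def)
  next
    case False
    then show ?thesis using a(3)[of j] c' that by auto
  qed
  show "\<exists>k<n. shR c' \<le> s k" using a(4) c' by auto
  show "\<And>j. s j \<le> lr c' j" using a(5) c' p by (auto simp: le_max_iff_disj)
qed

lemma AB_wle: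
  assumes ab: "AB n c s" and p: "pc c i = WRd x" "\<not> x > max (lr c i) (shR c)"
    and c': "c' = c\<lparr>lr := (lr c)(i := max (lr c i) (shR c)), pc := (pc c)(i := Done RTrue)\<rparr>"
  shows "AB n c' (s(i := max (s i) x))"
proof (rule AB_I)
  note a = AB_D[OF ab]
  have mo: "s i \<le> max (s i) x" by simp
  have l: "\<exists>k<n. lr c i \<le> s k" using a(3) p by auto
  show "lr c' j = y" if "pc c' j = WWrA y" for j y using a(1)[of j y] that c' by (cases "j = i") auto
  show "lr c' j < y" if "pc c' j = WWrB y" for j y using a(2)[of j y] that c' p by (cases "j = i") auto
  show "\<exists>k<n. lr c' j \<le> (s(i := max (s i) x)) k" if "\<And>y. pc c' j \<noteq> WWrA y" for j
  proof (cases "j = i")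
    case True
    have "\<exists>k<n. max (lr c i) (shR c) \<le> s k" using l a(4) by (auto simp: max_def)
    then have "\<exists>k<n. max (lr c i) (shR c) \<le> (s(i := max (s i) x)) k"
      by (rule ex_mono[where s = s and t = i, OF mo])
    then show ?thesis using True c' by simp
  next
    case False
    then have "\<exists>k<n. lr c j \<le> s k" using a(3)[of j] c' that by auto
    then show ?thesis using False c' ex_mono[where s = s and t = i, OF mo] by auto
  qed
  show "\<exists>k<n. shR c' \<le> (s(i := max (s i) x)) k" using a(4) c' ex_mono[where s = s and t = i, OF mo] by auto
  show "(s(i := max (s i) x)) j \<le> lr c' j" for j using a(5)[of j] a(5)[of i] c' p by (cases "j = i") auto
qed

lemma AB_wA:
  assumes ab: "AB n c s" and p: "pc c i = WWrA x" "i < n"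
    and c': "c' = c\<lparr>shR := x, pc := (pc c)(i := Done RTrue)\<rparr>"
  shows "AB n c' (s(i := max (s i) x))"
proof (rule AB_I)
  note a = AB_D[OF ab]
  have mo: "s i \<le> max (s i) x" by simp
  have lx: "lr c i = x" using a(1) p by auto
  show "lr c' j = y" if "pc c' j = WWrA y" for j y using a(1)[of j y] that c' by (cases "j = i") auto
  show "lr c' j < y" if "pc c' j = WWrB y" for j y using a(2)[of j y] that c' p by (cases "j = i") auto
  show "\<exists>k<n. lr c' j \<le> (s(i := max (s i) x)) k" if "\<And>y. pc c' j \<noteq> WWrA y" for j
  proof (cases "j = i")
    case True
    then show ?thesis using lx c' p by auto
  next
    case False
    then have "\<exists>k<n. lr c j \<le> s k" using a(3)[of j] c' that by auto
    then show ?thesis using False c' ex_mono[where s = s and t = i, OF mo] by auto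
  qed
  show "\<exists>k<n. shR c' \<le> (s(i := max (s i) x)) k" using c' p by auto
  show "\<And>j. (s(i := max (s i) x)) j \<le> lr c' j" using a(5) c' lx by auto
qed

lemma AB_wB:
  assumes ab: "AB n c s" and p: "pc c i = WWrB x" "i < n"
    and c': "c' = c\<lparr>shR := x, lr := (lr c)(i := x), pc := (pc c)(i := Done RTrue)\<rparr>"
  shows "AB n c' (s(i := max (s i) x))"
proof (rule AB_I)
  note a = AB_D[OF ab]
  have mo: "s i \<le> max (s i) x" by simp
  have lx: "lr c i < x" using a(2) p by auto
  have sx: "max (s i) x = x" using lx a(5)[of i] by simp
  show "lr c' j = y" if "pc c' j = WWrA y" for j y using a(1)[of j y] that c' by (cases "j = i") auto
  show "lr c' j < y" if "pc c' j = WWrB y" for j y using a(2)[of j y] that c' p by (cases "j = i") auto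
  show "\<exists>k<n. lr c' j \<le> (s(i := max (s i) x)) k" if "\<And>y. pc c' j \<noteq> WWrA y" for j
  proof (cases "j = i")
    case True
    then show ?thesis using sx c' p by auto
  next
    case False
    then have "\<exists>k<n. lr c j \<le> s k" using a(3)[of j] c' that by auto
    then show ?thesis using False c' ex_mono[where s = s and t = i, OF mo] by auto
  qed
  show "\<exists>k<n. shR c' \<le> (s(i := max (s i) x)) k" using c' p sx by auto
  show "\<And>j. (s(i := max (s i) x)) j \<le> lr c' j" using a(5) c' sx by auto
qed

lemma AB_rr:
  assumes ab: "AB n c s" and p: "pc c i = RRd" "i < n"
    and c': "c' = c\<lparr>lr := (lr c)(i := max (lr c i) (shR c)),
                           pc := (pc c)(i := Done (RVal (max (lr c i) (shR c))))\<rparr>"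
  shows "AB n c' (s(i := max (lr c i) (shR c)))" "s i \<le> max (lr c i) (shR c)"
    "max (lr c i) (shR c) \<le> Max {s j |j. j < n}"
proof -
  note a = AB_D[OF ab]
  let ?y = "max (lr c i) (shR c)"
  show si: "s i \<le> ?y" using a(5)[of i] by simp
  have l: "\<exists>k<n. lr c i \<le> s k" using a(3) p by auto
  have ly: "\<exists>k<n. ?y \<le> s k" using l a(4) by (auto simp: max_def)
  then show "?y \<le> Max {s j |j. j < n}" using le_Max_s by blast
  show "AB n c' (s(i := ?y))"
  proof (rule AB_I)
    show "lr c' j = y" if "pc c' j = WWrA y" for j y using a(1)[of j y] that c' by (cases "j = i") auto
    show "lr c' j < y" if "pc c' j = WWrB y" for j y using a(2)[of j y] that c' p by (cases "j = i") auto
    show "\<exists>k<n. lr c' j \<le> (s(i := ?y)) k" if "\<And>y. pc c' j \<noteq> WWrA y" for j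
    proof (cases "j = i")
      case True
      then show ?thesis using c' p by auto
    next
      case False
      then have "\<exists>k<n. lr c j \<le> s k" using a(3)[of j] c' that by auto
      then show ?thesis using False c' ex_mono[where s = s and t = i, OF si] by auto
    qed
    show "\<exists>k<n. shR c' \<le> (s(i := ?y)) k" using c' a(4) ex_mono[where s = s and t = i, OF si] by auto
    show "\<And>j. (s(i := ?y)) j \<le> lr c' j" using a(5) c' by auto
  qed
qed

lemma reach_Inv: "reach n c tr \<Longrightarrow> 0 < n \<Longrightarrow> \<exists>L. Inv n c tr L"
proof (induction rule: reach.induct)
  case reach_init
  have "TP init [] []" by (simp add: TP_def pend_def)
  moreover have "AB n init (\<lambda>_. 1)" using reach_init by (auto simp: AB_def init_def)
  ultimately show ?case unfolding Inv_def by (auto simp: H_def)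
next
  case (reach_step c tr a c')
  obtain L where inv: "Inv n c tr L" using reach_step by blast
  have j: "J c tr" using reach_J[OF reach_step.hyps(1)] .
  have tp: "TP c tr L" and lg: "rmr_legal n (\<lambda>_. 1) (H tr L)" and ab: "AB n c (rmr_st (\<lambda>_. 1) (H tr L))"
    using inv by (auto simp: Inv_def)
  define s where "s = rmr_st (\<lambda>_. 1) (H tr L)"
  note ab = ab[folded s_def]
  from reach_step.hyps(2) show ?case
  proof cases
    case (invoke i ov)
    have "AB n c' s" using invoke by (intro AB_pc[OF ab, where i = i and q = "start ov"]; cases ov) auto
    then show ?thesis
      using TP_invoke[OF tp j, of i c' ov] invoke H_snoc[OF tp] lg unfolding Inv_def s_def by auto
  next
    case (w_read_gt_A i x)
    have "AB n c' s" by (rule AB_gtA[OF ab w_read_gt_A(4,5,2)])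
    then have "AB n c' (rmr_st (\<lambda>_. 1) (H tr L))" by (simp add: s_def)
    then show ?thesis unfolding w_read_gt_A(1)
      by (intro nolin_step[OF inv, where q = "WWrA x"]) (auto simp: w_read_gt_A)
  next
    case (w_read_gt_B i x)
    have "AB n c' s" by (rule AB_gtB[OF ab w_read_gt_B(4,5,2)])
    then have "AB n c' (rmr_st (\<lambda>_. 1) (H tr L))" by (simp add: s_def)
    then show ?thesis unfolding w_read_gt_B(1)
      by (intro nolin_step[OF inv, where q = "WWrB x"]) (auto simp: w_read_gt_B)
  next
    case (w_read_le i x)
    have h: "rmr_legal n s [(i, ov, RTrue)] \<and> AB n c' (rmr_st s [(i, ov, RTrue)])"
      if "matches ov (pc c i)" for ov
    proof -
      have ov: "ov = RMaxWrite x" using that w_read_le(4) by (cases ov) auto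
      show ?thesis unfolding ov rmr_st_write using AB_wle[OF ab w_read_le(4,5,2)] by simp
    qed
    show ?thesis unfolding w_read_le(1)
      by (rule lin_step[OF inv j _ _ _ h[unfolded s_def]]) (auto simp: w_read_le)
  next
    case (w_write_A i x)
    have h: "rmr_legal n s [(i, ov, RTrue)] \<and> AB n c' (rmr_st s [(i, ov, RTrue)])"
      if "matches ov (pc c i)" for ov
    proof -
      have ov: "ov = RMaxWrite x" using that w_write_A(4) by (cases ov) auto
      show ?thesis unfolding ov rmr_st_write using AB_wA[OF ab w_write_A(4,3,2)] by simp
    qed
    show ?thesis unfolding w_write_A(1)
      by (rule lin_step[OF inv j _ _ _ h[unfolded s_def]]) (auto simp: w_write_A)
  next
    case (w_write_B i x)
    have h: "rmr_legal n s [(i, ov, RTrue)] \<and> AB n c' (rmr_st s [(i, ov, RTrue)])"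
      if "matches ov (pc c i)" for ov
    proof -
      have ov: "ov = RMaxWrite x" using that w_write_B(4) by (cases ov) auto
      show ?thesis unfolding ov rmr_st_write using AB_wB[OF ab w_write_B(4,3,2)] by simp
    qed
    show ?thesis unfolding w_write_B(1)
      by (rule lin_step[OF inv j _ _ _ h[unfolded s_def]]) (auto simp: w_write_B)
  next
    case (r_read i)
    let ?y = "max (lr c i) (shR c)"
    have h: "rmr_legal n s [(i, ov, RVal ?y)] \<and> AB n c' (rmr_st s [(i, ov, RVal ?y)])"
      if "matches ov (pc c i)" for ov
    proof -
      have ov: "ov = RMaxRead" using that r_read(4) by (cases ov) auto
      show ?thesis unfolding ov using AB_rr[OF ab r_read(4,3,2)] by simp
    qed
    show ?thesis unfolding r_read(1)
      by (rule lin_step[OF inv j _ _ _ h[unfolded s_def]]) (auto simp: r_read)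
  next
    case (ret i v)
    have "AB n c' s" using ret by (intro AB_pc[OF ab, where i = i and q = Idle]) auto
    then show ?thesis
      using TP_ret[OF tp j, of i v c'] ret H_snoc[OF tp] lg unfolding Inv_def s_def by auto
  qed
qed

lemma Inv_lin: "Inv n c tr L \<Longrightarrow> linearizable n tr"
proof -
  assume inv: "Inv n c tr L"
  then have tp: "TP c tr L" and lg: "rmr_legal n (\<lambda>_. 1) (H tr L)" by (auto simp: Inv_def)
  from tp have c1: "distinct (map fst L) \<and>
     (\<forall>(k, v) \<in> set L. k < length tr \<and> is_inv (tr ! k) \<and>
         (\<forall>m. ret_idx tr k = Some m \<longrightarrow> v = ret_resp (tr ! m))) \<and>
     (\<forall>k m. k < length tr \<and> is_inv (tr ! k) \<and> ret_idx tr k = Some m \<longrightarrow> k \<in> fst ` set L) \<and>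
     (\<forall>a b m. a < length L \<and> b < length L \<and> ret_idx tr (fst (L ! a)) = Some m \<and>
         m < fst (L ! b) \<longrightarrow> a < b)"
    unfolding TP_def by (elim conjE) (intro conjI)
  show ?thesis unfolding linearizable_def
    apply (rule exI[of _ L])
    using c1 lg unfolding H_def by (elim conjE) (intro conjI)
qed

lemma alg_lin: "0 < n \<Longrightarrow> alg_linearizable n"
  unfolding alg_linearizable_def using reach_Inv Inv_lin by blast



fun mu :: "pcs \<Rightarrow> nat" where
  "mu Idle = 0" | "mu (WRd x) = 3" | "mu (WWrA x) = 2" | "mu (WWrB x) = 2" | "mu RRd = 2" | "mu (Done v) = 1"

lemma trans_mu:
  assumes "trans n c a c'" "pc c i \<noteq> Idle" "\<not> is_ret_of i a"
  shows "pc c' i \<noteq> Idle \<and> mu (pc c' i) \<le> mu (pc c i) \<and>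
    (act_proc a = i \<longrightarrow> mu (pc c' i) < mu (pc c i) \<and> a = Step i)"
  using assms(1)
proof cases
  case (invoke j ov)
  then show ?thesis using assms(2) by (cases "j = i") auto
next
  case (ret j v)
  then show ?thesis using assms(2,3) by (cases "j = i") auto
qed (auto simp: assms(2))

lemma mu_start: "pc c i = Idle \<Longrightarrow> trans n c (Invoke i ov) c' \<Longrightarrow> pc c' i = start ov"
  by (auto elim: trans.cases)

lemma start_props: "start ov \<noteq> Idle" "mu (start ov) \<le> 3"
  by (cases ov; simp)+

lemma inf_trans_invoke:
  assumes "trans n c (Invoke i ov) c'"
  shows "pc c' i = start ov"
  using assms by cases auto

lemma wf_mono:
  assumes ex: "inf_exec n f g" and nr: "\<forall>m>k. \<not> is_ret_of i (g m)"
    and m: "m > k" "pc (f m) i \<noteq> Idle"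
  shows "pc (f (m + d)) i \<noteq> Idle \<and> mu (pc (f (m + d)) i) \<le> mu (pc (f m) i)"
proof (induction d)
  case 0
  then show ?case using m by simp
next
  case (Suc d)
  have t: "trans n (f (m + d)) (g (m + d)) (f (Suc (m + d)))" using ex by (simp add: inf_exec_def)
  have "\<not> is_ret_of i (g (m + d))" using nr m by simp
  then show ?case using trans_mu[OF t _] Suc by fastforce
qed

lemma wait_free_all: "wait_free n"
  unfolding wait_free_def
proof (intro allI impI, elim conjE)
  fix f g k i ov
  assume ex: "inf_exec n f g" and gk: "g k = Invoke i ov" and inf: "\<forall>m. \<exists>m'>m. act_proc (g m') = i"
  show "\<exists>m>k. is_ret_of i (g m)"
  proof (rule ccontr)
    assume "\<not> (\<exists>m>k. is_ret_of i (g m))"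
    then have nr: "\<forall>m>k. \<not> is_ret_of i (g m)" by blast
    have tk: "trans n (f k) (g k) (f (Suc k))" using ex by (simp add: inf_exec_def)
    have s0: "pc (f (Suc k)) i = start ov" using inf_trans_invoke tk gk by metis
    have claim: "\<exists>m>k. pc (f m) i \<noteq> Idle \<and> mu (pc (f m) i) + t \<le> 3" for t
    proof (induction t)
      case 0
      show ?case using s0 start_props by (intro exI[of _ "Suc k"]) auto
    next
      case (Suc t)
      then obtain m where m: "m > k" "pc (f m) i \<noteq> Idle" "mu (pc (f m) i) + t \<le> 3" by blast
      obtain m' where m': "m' > m" "act_proc (g m') = i" using inf by blast
      obtain d where d: "m' = m + d" using m'(1) less_imp_add_positive by blast
      have a: "pc (f m') i \<noteq> Idle" "mu (pc (f m') i) \<le> mu (pc (f m) i)"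
        using wf_mono[OF ex nr m(1,2), of d] d by auto
      have t: "trans n (f m') (g m') (f (Suc m'))" using ex by (simp add: inf_exec_def)
      have "\<not> is_ret_of i (g m')" using nr m m' by simp
      then have "pc (f (Suc m')) i \<noteq> Idle \<and> mu (pc (f (Suc m')) i) < mu (pc (f m') i)"
        using trans_mu[OF t a(1)] m'(2) by blast
      then show ?case using a m m' by (intro exI[of _ "Suc m'"]) auto
    qed
    from claim[of 4] show False by auto
  qed
qed

lemma reach_take: "reach n c tr \<Longrightarrow> p \<le> length tr \<Longrightarrow> \<exists>c'. reach n c' (take p tr)"
proof (induction arbitrary: p rule: reach.induct)
  case reach_init
  then show ?case using reach.reach_init by auto
next
  case (reach_step c tr a c')
  show ?case
  proof (cases "p \<le> length tr")
    case True
    then show ?thesis using reach_step.IH by simp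
  next
    case False
    then have "p = Suc (length tr)" using reach_step.prems by simp
    then show ?thesis using reach.reach_step[OF reach_step.hyps] by auto
  qed
qed

lemma reach_SC:
  "reach n c tr \<Longrightarrow> k < length tr \<Longrightarrow> tr ! k = Invoke i ov \<Longrightarrow>
   (\<forall>m. k < m \<and> m < length tr \<longrightarrow> \<not> is_ret_of i (tr ! m)) \<Longrightarrow>
   pc c i \<noteq> Idle \<and> mu (pc c i) + card {m. k < m \<and> m < length tr \<and> tr ! m = Step i} \<le> 3"
proof (induction arbitrary: k rule: reach.induct)
  case reach_init
  then show ?case by simp
next
  case (reach_step c tr a c')
  show ?case
  proof (cases "k = length tr")
    case True
    then have a: "a = Invoke i ov" using reach_step.prems by simp
    have pcs: "pc c' i = start ov" using inf_trans_invoke reach_step.hyps(2) a by metis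
    have e0: "{m. k < m \<and> m < length (tr @ [a]) \<and> (tr @ [a]) ! m = Step i} = {}"
      using True by auto
    have c0: "card {m. k < m \<and> m < length (tr @ [a]) \<and> (tr @ [a]) ! m = Step i} = 0"
      by (subst e0) (rule card.empty)
    show ?thesis using start_props[of ov] pcs c0 by (metis add_0_right)
  next
    case False
    then have k: "k < length tr" using reach_step.prems by simp
    have tk: "tr ! k = Invoke i ov" using k reach_step.prems by (simp add: nth_append)
    have nr: "\<forall>m. k < m \<and> m < length tr \<longrightarrow> \<not> is_ret_of i (tr ! m)"
      using reach_step.prems(3) k by (auto simp: nth_append)
    have ih: "pc c i \<noteq> Idle" "mu (pc c i) + card {m. k < m \<and> m < length tr \<and> tr ! m = Step i} \<le> 3"
      using reach_step.IH[OF k tk nr] by auto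
    have na: "\<not> is_ret_of i a" using reach_step.prems(3)[rule_format, of "length tr"] k by simp
    have tm: "pc c' i \<noteq> Idle \<and> mu (pc c' i) \<le> mu (pc c i) \<and>
      (act_proc a = i \<longrightarrow> mu (pc c' i) < mu (pc c i) \<and> a = Step i)"
      by (rule trans_mu[OF reach_step.hyps(2) ih(1) na])
    have se: "{m. k < m \<and> m < length (tr @ [a]) \<and> (tr @ [a]) ! m = Step i} =
      {m. k < m \<and> m < length tr \<and> tr ! m = Step i} \<union> (if a = Step i then {length tr} else {})"
      using k by (auto simp: nth_append)
    have fin: "finite {m. k < m \<and> m < length tr \<and> tr ! m = Step i}"
      by (rule finite_subset[of _ "{..<length tr}"]) auto
    let ?S = "{m. k < m \<and> m < length tr \<and> tr ! m = Step i}"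
    let ?S' = "{m. k < m \<and> m < length (tr @ [a]) \<and> (tr @ [a]) ! m = Step i}"
    show ?thesis
    proof (cases "a = Step i")
      case True
      then have "?S' = insert (length tr) ?S" using se by simp
      moreover have "length tr \<notin> ?S" by simp
      ultimately have "card ?S' = Suc (card ?S)" using fin by simp
      moreover have "mu (pc c' i) < mu (pc c i)" using tm True by simp
      ultimately show ?thesis using tm ih(2) by linarith
    next
      case False
      then have "?S' = ?S" using se by simp
      then show ?thesis using tm ih(2) by simp
    qed
  qed
qed

lemma step_complexity_2: "step_complexity_le n 2"
  unfolding step_complexity_le_def
proof (intro allI impI, elim conjE)
  fix c tr k i ov j
  assume r: "reach n c tr" and k: "k < length tr" and tk: "tr ! k = Invoke i ov" and j: "j \<le> length tr"
    and nr: "\<forall>m. k < m \<and> m < j \<longrightarrow> \<not> is_ret_of i (tr ! m)"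
  show "card {m. k < m \<and> m < j \<and> tr ! m = Step i} \<le> 2"
  proof (cases "k < j")
    case False
    then have "{m. k < m \<and> m < j \<and> tr ! m = Step i} = {}" by auto
    then show ?thesis by (metis card.empty zero_le)
  next
    case True
    obtain c' where r': "reach n c' (take j tr)" using reach_take[OF r j] by blast
    have l: "length (take j tr) = j" using j by simp
    have e: "{m. k < m \<and> m < length (take j tr) \<and> take j tr ! m = Step i} = {m. k < m \<and> m < j \<and> tr ! m = Step i}"
      using l by auto
    have "pc c' i \<noteq> Idle \<and> mu (pc c' i) + card {m. k < m \<and> m < length (take j tr) \<and> take j tr ! m = Step i} \<le> 3"
    proof -
      have tk': "take j tr ! k = Invoke i ov" using True tk by simp
      have nr': "\<forall>m. k < m \<and> m < length (take j tr) \<longrightarrow> \<not> is_ret_of i (take j tr ! m)"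
        using nr l by auto
      have kl: "k < length (take j tr)" using l True by simp
      show ?thesis by (rule reach_SC[OF r' kl tk' nr'])
    qed
    moreover have "pc c' i \<noteq> Idle \<Longrightarrow> mu (pc c' i) \<ge> 1" by (cases "pc c' i") auto
    ultimately show ?thesis using e by auto
  qed
qed



lemma seq_prefix: "sequential (tr @ [a]) \<Longrightarrow> sequential tr"
  unfolding sequential_def
proof (intro allI impI, elim conjE)
  fix k1 k2
  assume s: "\<forall>k1 k2. k1 < k2 \<and> k2 < length (tr @ [a]) \<and> is_inv ((tr @ [a]) ! k1) \<and> is_inv ((tr @ [a]) ! k2) \<longrightarrow>
      (\<exists>m. ret_idx (tr @ [a]) k1 = Some m \<and> m < k2)"
    and k: "k1 < k2" "k2 < length tr" "is_inv (tr ! k1)" "is_inv (tr ! k2)"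
  have "\<exists>m. ret_idx (tr @ [a]) k1 = Some m \<and> m < k2"
    apply (rule s[rule_format])
    using k by (simp add: nth_append)
  then obtain m where m: "ret_idx (tr @ [a]) k1 = Some m" "m < k2" by blast
  have k1: "k1 < length tr" using k by simp
  show "\<exists>m. ret_idx tr k1 = Some m \<and> m < k2"
  proof (cases "ret_idx tr k1")
    case None
    then show ?thesis using m k ret_idx_snoc[OF k1, of a] by (auto split: if_splits)
  next
    case (Some m')
    then show ?thesis using m ret_idx_snoc[OF k1, of a] by auto
  qed
qed

lemma seq_invoke_nopend: "sequential (tr @ [Invoke i ov]) \<Longrightarrow> \<not> pend tr k"
proof
  assume s: "sequential (tr @ [Invoke i ov])" and p: "pend tr k"
  have k: "k < length tr" "is_inv (tr ! k)" "ret_idx tr k = None" using p by (auto simp: pend_def)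
  have "\<exists>m. ret_idx (tr @ [Invoke i ov]) k = Some m \<and> m < length tr"
    apply (rule s[unfolded sequential_def, rule_format, of k "length tr"])
    using k by (simp add: nth_append)
  then show False using ret_idx_snoc[OF k(1), of "Invoke i ov"] k by simp
qed

lemma seq_pend_last: "sequential tr \<Longrightarrow> pend tr k0 \<Longrightarrow> k0 < k \<Longrightarrow> k < length tr \<Longrightarrow> \<not> is_inv (tr ! k)"
proof
  assume s: "sequential tr" and p: "pend tr k0" and k: "k0 < k" "k < length tr" and i: "is_inv (tr ! k)"
  have "\<exists>m. ret_idx tr k0 = Some m \<and> m < k"
    apply (rule s[unfolded sequential_def, rule_format, of k0 k])
    using p k i by (simp add: pend_def)
  then show False using p by (simp add: pend_def)
qed

lemma seq_one:
  assumes j: "J c tr" and s: "sequential tr" and i: "pc c i \<noteq> Idle" and i2: "pc c i2 \<noteq> Idle"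
  shows "i = i2"
proof -
  obtain k1 where k1: "pend tr k1" "act_proc (tr ! k1) = i" using j i unfolding J_def by blast
  obtain k2 where k2: "pend tr k2" "act_proc (tr ! k2) = i2" using j i2 unfolding J_def by blast
  have "k1 = k2"
  proof (rule ccontr)
    assume "k1 \<noteq> k2"
    then consider "k1 < k2" | "k2 < k1" by linarith
    then show False
    proof cases
      case 1
      then show False using seq_pend_last[OF s k1(1) 1] k2(1) by (simp add: pend_def)
    next
      case 2
      then show False using seq_pend_last[OF s k2(1) 2] k1(1) by (simp add: pend_def)
    qed
  qed
  then show ?thesis using k1 k2 by simp
qed

lemma filter_upt_insert:
  "j < N \<Longrightarrow> \<not> P j \<Longrightarrow> (\<forall>k. j < k \<and> k < N \<longrightarrow> \<not> P k) \<Longrightarrow>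
   filter (\<lambda>k. P k \<or> k = j) [0..<N] = filter P [0..<N] @ [j]"
proof (induction N)
  case 0
  then show ?case by simp
next
  case (Suc N)
  show ?case
  proof (cases "N = j")
    case True
    have "filter (\<lambda>k. P k \<or> k = j) [0..<j] = filter P [0..<j]"
      by (rule filter_cong) auto
    then show ?thesis using True Suc.prems by simp
  next
    case False
    then have "j < N" using Suc.prems by simp
    then show ?thesis using Suc.IH Suc.prems False by auto
  qed
qed

lemma seq_hist_nonret:
  assumes "\<And>k. pend tr k \<Longrightarrow> \<not> is_ret_of (act_proc (tr ! k)) a"
  shows "seq_hist (tr @ [a]) = seq_hist tr"
proof -
  let ?t = "tr @ [a]"
  have ri: "k < length tr \<Longrightarrow> is_inv (tr ! k) \<Longrightarrow> ret_idx ?t k = ret_idx tr k" for k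
    using ret_idx_snoc[of k tr a] assms unfolding pend_def by (auto split: option.splits)
  have f: "filter (\<lambda>k. is_inv (?t ! k) \<and> ret_idx ?t k \<noteq> None) [0..<length tr]
     = filter (\<lambda>k. is_inv (tr ! k) \<and> ret_idx tr k \<noteq> None) [0..<length tr]"
    by (rule filter_cong) (auto simp: nth_append ri)
  have m: "map (\<lambda>k. (inv_op (?t ! k), ret_resp (?t ! the (ret_idx ?t k))))
      (filter (\<lambda>k. is_inv (tr ! k) \<and> ret_idx tr k \<noteq> None) [0..<length tr]) =
    map (\<lambda>k. (inv_op (tr ! k), ret_resp (tr ! the (ret_idx tr k))))
      (filter (\<lambda>k. is_inv (tr ! k) \<and> ret_idx tr k \<noteq> None) [0..<length tr])"
  proof (rule map_cong[OF refl])
    fix k assume "k \<in> set (filter (\<lambda>k. is_inv (tr ! k) \<and> ret_idx tr k \<noteq> None) [0..<length tr])"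
    then have k: "k < length tr" "is_inv (tr ! k)" "ret_idx tr k \<noteq> None" by auto
    then obtain m where m: "ret_idx tr k = Some m" by auto
    then have "m < length tr" using ret_idx_Some by blast
    then show "(inv_op (?t ! k), ret_resp (?t ! the (ret_idx ?t k))) =
      (inv_op (tr ! k), ret_resp (tr ! the (ret_idx tr k)))" using k m ri by (simp add: nth_append)
  qed
  have u: "[0..<length ?t] = [0..<length tr] @ [length tr]" by simp
  have lastF: "filter (\<lambda>k. is_inv (?t ! k) \<and> ret_idx ?t k \<noteq> None) [length tr] = []"
    by (simp add: ret_idx_last)
  show ?thesis unfolding seq_hist_alt u filter_append f lastF append_Nil2
    by (rule m)
qed


lemma seq_hist_ret:
  assumes p: "pend tr k0" "act_proc (tr ! k0) = i"
    and u: "\<And>k. pend tr k \<Longrightarrow> act_proc (tr ! k) = i \<Longrightarrow> k = k0"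
    and lst: "\<And>k. k0 < k \<Longrightarrow> k < length tr \<Longrightarrow> \<not> is_inv (tr ! k)"
  shows "seq_hist (tr @ [Return i v]) = seq_hist tr @ [(inv_op (tr ! k0), v)]"
proof -
  let ?t = "tr @ [Return i v]"
  let ?P = "\<lambda>k. is_inv (tr ! k) \<and> ret_idx tr k \<noteq> None"
  let ?P' = "\<lambda>k. is_inv (?t ! k) \<and> ret_idx ?t k \<noteq> None"
  have k0: "k0 < length tr" "is_inv (tr ! k0)" "ret_idx tr k0 = None" using p by (auto simp: pend_def)
  have ri: "k < length tr \<Longrightarrow> ret_idx ?t k = (case ret_idx tr k of Some m \<Rightarrow> Some m
     | None \<Rightarrow> if act_proc (tr ! k) = i then Some (length tr) else None)" for k
    using ret_idx_snoc[of k tr "Return i v"] by (cases "tr ! k") auto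
  have f: "filter ?P' [0..<length tr] = filter (\<lambda>k. ?P k \<or> k = k0) [0..<length tr]"
  proof (rule filter_cong[OF refl])
    fix k assume "k \<in> set [0..<length tr]"
    then have k: "k < length tr" by simp
    show "?P' k = (?P k \<or> k = k0)"
    proof (cases "ret_idx tr k")
      case None
      have "?P' k = (is_inv (tr ! k) \<and> act_proc (tr ! k) = i)" using k None ri[OF k] by (simp add: nth_append)
      also have "\<dots> = (k = k0)" using u[of k] None k k0 p(2) by (auto simp: pend_def)
      finally show ?thesis using None by simp
    next
      case (Some m)
      then show ?thesis using k ri[OF k] k0 by (auto simp: nth_append)
    qed
  qed
  have f2: "filter (\<lambda>k. ?P k \<or> k = k0) [0..<length tr] = filter ?P [0..<length tr] @ [k0]"
    by (rule filter_upt_insert) (use k0 lst in auto)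
  have m: "map (\<lambda>k. (inv_op (?t ! k), ret_resp (?t ! the (ret_idx ?t k)))) (filter ?P [0..<length tr]) =
    map (\<lambda>k. (inv_op (tr ! k), ret_resp (tr ! the (ret_idx tr k)))) (filter ?P [0..<length tr])"
  proof (rule map_cong[OF refl])
    fix k assume "k \<in> set (filter ?P [0..<length tr])"
    then have k: "k < length tr" "is_inv (tr ! k)" "ret_idx tr k \<noteq> None" by auto
    then obtain m where m: "ret_idx tr k = Some m" by auto
    then have "m < length tr" using ret_idx_Some by blast
    then show "(inv_op (?t ! k), ret_resp (?t ! the (ret_idx ?t k))) =
      (inv_op (tr ! k), ret_resp (tr ! the (ret_idx tr k)))" using k m ri[OF k(1)] by (simp add: nth_append)
  qed
  have m2: "(inv_op (?t ! k0), ret_resp (?t ! the (ret_idx ?t k0))) = (inv_op (tr ! k0), v)"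
    using k0 ri[OF k0(1)] p(2) by (simp add: nth_append)
  have u2: "[0..<length ?t] = [0..<length tr] @ [length tr]" by simp
  have lastF: "filter ?P' [length tr] = []" by (simp add: ret_idx_last)
  show ?thesis unfolding seq_hist_alt u2 filter_append f lastF append_Nil2 f2 map_append m
    using m2 by simp
qed


fun mr_st :: "nat \<Rightarrow> (rop \<times> resp) list \<Rightarrow> nat" where
  "mr_st m [] = m"
| "mr_st m ((RMaxWrite x, v) # h) = mr_st (max m x) h"
| "mr_st m ((RMaxRead, v) # h) = mr_st m h"

lemma mr_snoc:
  "mr_legal m (h @ [e]) = (mr_legal m h \<and> mr_legal (mr_st m h) [e]) \<and>
   mr_st m (h @ [e]) = mr_st (mr_st m h) [e]"
proof (induction h arbitrary: m)
  case Nil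
  then show ?case by simp
next
  case (Cons a h)
  obtain ov v where a: "a = (ov, v)" by (cases a) auto
  show ?case
  proof (cases ov)
    case (RMaxWrite x)
    then show ?thesis using Cons.IH by (cases v) (simp_all add: a)
  next
    case RMaxRead
    then show ?thesis using Cons.IH by (cases v) (simp_all add: a)
  qed
qed

fun wval :: "rop \<Rightarrow> nat" where
  "wval (RMaxWrite x) = x" | "wval RMaxRead = 0"

definition SQ' :: "config \<Rightarrow> act list \<Rightarrow> nat \<Rightarrow> bool" where
  "SQ' c tr M \<longleftrightarrow> (\<forall>i. (\<forall>x. pc c i \<noteq> WWrA x) \<longrightarrow> lr c i \<le> shR c)
    \<and> ((\<forall>i. pc c i \<noteq> Done RTrue) \<longrightarrow> shR c = M)
    \<and> (\<forall>i x. pc c i = WWrA x \<longrightarrow> lr c i = x \<and> M < x)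
    \<and> (\<forall>i x. pc c i = WWrB x \<longrightarrow> M < x)
    \<and> (\<forall>k. pend tr k \<longrightarrow> pc c (act_proc (tr ! k)) = Done RTrue \<longrightarrow> shR c = max M (wval (inv_op (tr ! k))))
    \<and> (\<forall>i y. pc c i = Done (RVal y) \<longrightarrow> y = M)"

lemma SQ'_D:
  assumes "SQ' c tr M"
  shows "\<And>j. (\<And>x. pc c j \<noteq> WWrA x) \<Longrightarrow> lr c j \<le> shR c"
    "(\<And>j. pc c j \<noteq> Done RTrue) \<Longrightarrow> shR c = M"
    "\<And>j x. pc c j = WWrA x \<Longrightarrow> lr c j = x \<and> M < x"
    "\<And>j x. pc c j = WWrB x \<Longrightarrow> M < x"
    "\<And>k. pend tr k \<Longrightarrow> pc c (act_proc (tr ! k)) = Done RTrue \<Longrightarrow> shR c = max M (wval (inv_op (tr ! k)))"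
    "\<And>j y. pc c j = Done (RVal y) \<Longrightarrow> y = M"
  using assms unfolding SQ'_def by blast+

lemma SQ'_I:
  assumes oth: "\<And>j. j \<noteq> i \<Longrightarrow> pc c j = Idle" and ol: "\<And>j. j \<noteq> i \<Longrightarrow> lr c j \<le> shR c"
    and i1: "(\<And>x. pc c i \<noteq> WWrA x) \<Longrightarrow> lr c i \<le> shR c"
    and i2: "pc c i \<noteq> Done RTrue \<Longrightarrow> shR c = M"
    and i3: "\<And>x. pc c i = WWrA x \<Longrightarrow> lr c i = x \<and> M < x"
    and i4: "\<And>x. pc c i = WWrB x \<Longrightarrow> M < x"
    and i5: "\<And>k. pend tr k \<Longrightarrow> act_proc (tr ! k) = i \<Longrightarrow> pc c i = Done RTrue \<Longrightarrow> shR c = max M (wval (inv_op (tr ! k)))"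
    and i6: "\<And>y. pc c i = Done (RVal y) \<Longrightarrow> y = M"
  shows "SQ' c tr M"
  unfolding SQ'_def
proof (intro conjI allI impI)
  fix j assume "\<forall>x. pc c j \<noteq> WWrA x"
  then show "lr c j \<le> shR c" using ol i1 by (cases "j = i") auto
next
  assume "\<forall>j. pc c j \<noteq> Done RTrue"
  then show "shR c = M" using i2 by auto
next
  fix j x assume a: "pc c j = WWrA x"
  then have "j = i" using oth by force
  then show "lr c j = x" "M < x" using i3 a by auto
next
  fix j x assume a: "pc c j = WWrB x"
  then have "j = i" using oth by force
  then show "M < x" using i4 a by auto
next
  fix k assume a: "pend tr k" "pc c (act_proc (tr ! k)) = Done RTrue"
  then have "act_proc (tr ! k) = i" using oth by force
  then show "shR c = max M (wval (inv_op (tr ! k)))" using i5 a by auto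
next
  fix j y assume a: "pc c j = Done (RVal y)"
  then have "j = i" using oth by force
  then show "y = M" using i6 a by auto
qed


lemma SQ_step:
  assumes sq: "SQ' c tr M" and j: "J c tr" and s: "sequential tr" and pci: "pc c i \<noteq> Idle"
    and nd: "\<And>v. pc c i \<noteq> Done v"
    and cp: "\<And>j. j \<noteq> i \<Longrightarrow> pc c' j = pc c j" "\<And>j. j \<noteq> i \<Longrightarrow> lr c' j = lr c j"
    and sh0: "shR c = M \<Longrightarrow> shR c \<le> shR c'"
    and H: "\<And>k0. pend tr k0 \<Longrightarrow> act_proc (tr ! k0) = i \<Longrightarrow> matches (inv_op (tr ! k0)) (pc c i) \<Longrightarrow>
       shR c = M \<Longrightarrow>
       ((\<forall>x. pc c' i \<noteq> WWrA x) \<longrightarrow> lr c' i \<le> shR c') \<and> (pc c' i \<noteq> Done RTrue \<longrightarrow> shR c' = M)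
       \<and> (\<forall>x. pc c' i = WWrA x \<longrightarrow> lr c' i = x \<and> M < x) \<and> (\<forall>x. pc c' i = WWrB x \<longrightarrow> M < x)
       \<and> (pc c' i = Done RTrue \<longrightarrow> shR c' = max M (wval (inv_op (tr ! k0))))
       \<and> (\<forall>y. pc c' i = Done (RVal y) \<longrightarrow> y = M)"
  shows "SQ' c' (tr @ [Step i]) M"
proof -
  note d = SQ'_D[OF sq]
  have oth: "j \<noteq> i \<Longrightarrow> pc c j = Idle" for j using seq_one[OF j s pci] by blast
  obtain k0 where k0: "pend tr k0" "act_proc (tr ! k0) = i" using j pci unfolding J_def by blast
  have mt: "matches (inv_op (tr ! k0)) (pc c i)" using j k0 unfolding J_def by blast
  have uq: "pend tr k \<Longrightarrow> act_proc (tr ! k) = i \<Longrightarrow> k = k0" for k using j k0 unfolding J_def by metis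
  have sM: "shR c = M" by (rule d(2)) (metis nd oth pcs.distinct(9))
  have sh: "shR c \<le> shR c'" by (rule sh0[OF sM])
  have h: "((\<forall>x. pc c' i \<noteq> WWrA x) \<longrightarrow> lr c' i \<le> shR c') \<and> (pc c' i \<noteq> Done RTrue \<longrightarrow> shR c' = M)
       \<and> (\<forall>x. pc c' i = WWrA x \<longrightarrow> lr c' i = x \<and> M < x) \<and> (\<forall>x. pc c' i = WWrB x \<longrightarrow> M < x)
       \<and> (pc c' i = Done RTrue \<longrightarrow> shR c' = max M (wval (inv_op (tr ! k0))))
       \<and> (\<forall>y. pc c' i = Done (RVal y) \<longrightarrow> y = M)" by (rule H[OF k0 mt sM])
  have pe: "pend (tr @ [Step i]) k = pend tr k" for k by (simp add: pend_snoc)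
  show ?thesis
  proof (rule SQ'_I[where i = i])
    show "\<And>j. j \<noteq> i \<Longrightarrow> pc c' j = Idle" using cp oth by simp
    show "\<And>j. j \<noteq> i \<Longrightarrow> lr c' j \<le> shR c'" using cp oth d(1) sh by (metis order.trans pcs.distinct(3))
    show "(\<And>x. pc c' i \<noteq> WWrA x) \<Longrightarrow> lr c' i \<le> shR c'" using h by blast
    show "pc c' i \<noteq> Done RTrue \<Longrightarrow> shR c' = M" using h by blast
    show "\<And>x. pc c' i = WWrA x \<Longrightarrow> lr c' i = x \<and> M < x" using h by blast
    show "\<And>x. pc c' i = WWrB x \<Longrightarrow> M < x" using h by blast
    show "\<And>y. pc c' i = Done (RVal y) \<Longrightarrow> y = M" using h by blast
    fix k assume a: "pend (tr @ [Step i]) k" "act_proc ((tr @ [Step i]) ! k) = i" "pc c' i = Done RTrue"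
    have pk: "pend tr k" using a(1) pe by simp
    then have e: "(tr @ [Step i]) ! k = tr ! k" by (simp add: nth_append pend_lt)
    then have "k = k0" using uq pk a(2) by simp
    then show "shR c' = max M (wval (inv_op ((tr @ [Step i]) ! k)))" using h a(3) e by simp
  qed
qed


lemma reach_SQ:
  "reach n c tr \<Longrightarrow> sequential tr \<Longrightarrow>
     mr_legal 1 (seq_hist tr) \<and> SQ' c tr (mr_st 1 (seq_hist tr))"
proof (induction rule: reach.induct)
  case reach_init
  show ?case by (simp add: seq_hist_alt SQ'_def init_def pend_def)
next
  case (reach_step c tr a c')
  have s: "sequential tr" using seq_prefix reach_step.prems by blast
  have lg: "mr_legal 1 (seq_hist tr)" and sq: "SQ' c tr (mr_st 1 (seq_hist tr))"
    using reach_step.IH[OF s] by auto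
  have j: "J c tr" using reach_J[OF reach_step.hyps(1)] .
  define M where "M = mr_st 1 (seq_hist tr)"
  note sq = sq[folded M_def]
  note d = SQ'_D[OF sq]
  have shn: "seq_hist (tr @ [Step i]) = seq_hist tr" for i by (rule seq_hist_nonret) simp
  from reach_step.hyps(2) show ?case
  proof cases
    case (invoke i ov)
    have np: "\<not> pend tr k" for k using seq_invoke_nopend reach_step.prems invoke(1) by blast
    have idle: "pc c j = Idle" for j using j np unfolding J_def by blast
    have sh: "seq_hist (tr @ [a]) = seq_hist tr" by (rule seq_hist_nonret) (use np in blast)
    have sM: "shR c = M" by (rule d(2)) (simp add: idle)
    have "SQ' c' (tr @ [a]) M"
    proof (rule SQ'_I[where i = i])
      show "\<And>j. j \<noteq> i \<Longrightarrow> pc c' j = Idle" using invoke idle by simp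
      show "\<And>j. j \<noteq> i \<Longrightarrow> lr c' j \<le> shR c'" using invoke idle d(1) by simp
      show "(\<And>x. pc c' i \<noteq> WWrA x) \<Longrightarrow> lr c' i \<le> shR c'" using invoke idle d(1) by simp
      show "pc c' i \<noteq> Done RTrue \<Longrightarrow> shR c' = M" using invoke sM by simp
      show "\<And>x. pc c' i = WWrA x \<Longrightarrow> lr c' i = x \<and> M < x" using invoke by (cases ov) auto
      show "\<And>x. pc c' i = WWrB x \<Longrightarrow> M < x" using invoke by (cases ov) auto
      show "\<And>k. pend (tr @ [a]) k \<Longrightarrow> act_proc ((tr @ [a]) ! k) = i \<Longrightarrow> pc c' i = Done RTrue \<Longrightarrow>
        shR c' = max M (wval (inv_op ((tr @ [a]) ! k)))" using invoke by (cases ov) auto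
      show "\<And>y. pc c' i = Done (RVal y) \<Longrightarrow> y = M" using invoke by (cases ov) auto
    qed
    then show ?thesis using lg sh M_def by simp
  next
    case (w_read_gt_A i x)
    have l: "lr c i \<le> shR c" using d(1)[of i] w_read_gt_A by simp
    have "SQ' c' (tr @ [Step i]) M"
      by (rule SQ_step[OF sq j s]) (use w_read_gt_A l in \<open>auto elim: matches.elims\<close>)
    then show ?thesis using lg shn M_def w_read_gt_A(1) by simp
  next
    case (w_read_gt_B i x)
    have l: "lr c i \<le> shR c" using d(1)[of i] w_read_gt_B by simp
    have "SQ' c' (tr @ [Step i]) M"
      by (rule SQ_step[OF sq j s]) (use w_read_gt_B l in \<open>auto elim: matches.elims\<close>)
    then show ?thesis using lg shn M_def w_read_gt_B(1) by simp
  next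
    case (w_read_le i x)
    have l: "lr c i \<le> shR c" using d(1)[of i] w_read_le by simp
    have "SQ' c' (tr @ [Step i]) M"
      by (rule SQ_step[OF sq j s]) (use w_read_le l in \<open>auto elim: matches.elims\<close>)
    then show ?thesis using lg shn M_def w_read_le(1) by simp
  next
    case (w_write_A i x)
    have l: "lr c i = x" "M < x" using d(3)[of i x] w_write_A by auto
    have "SQ' c' (tr @ [Step i]) M"
      by (rule SQ_step[OF sq j s]) (use w_write_A l in \<open>auto elim: matches.elims\<close>)
    then show ?thesis using lg shn M_def w_write_A(1) by simp
  next
    case (w_write_B i x)
    have l: "M < x" using d(4)[of i x] w_write_B by auto
    have "SQ' c' (tr @ [Step i]) M"
      by (rule SQ_step[OF sq j s]) (use w_write_B l in \<open>auto elim: matches.elims\<close>)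
    then show ?thesis using lg shn M_def w_write_B(1) by simp
  next
    case (r_read i)
    have l: "lr c i \<le> shR c" using d(1)[of i] r_read by simp
    have "SQ' c' (tr @ [Step i]) M"
      by (rule SQ_step[OF sq j s]) (use r_read l in \<open>auto elim: matches.elims\<close>)
    then show ?thesis using lg shn M_def r_read(1) by simp
  next
    case (ret i v)
    have pci: "pc c i \<noteq> Idle" using ret by simp
    have oth: "j \<noteq> i \<Longrightarrow> pc c j = Idle" for j using seq_one[OF j s pci] by blast
    obtain k0 where k0: "pend tr k0" "act_proc (tr ! k0) = i" using j pci unfolding J_def by blast
    have mt: "matches (inv_op (tr ! k0)) (pc c i)" using j k0 unfolding J_def by blast
    have uq: "pend tr k \<Longrightarrow> act_proc (tr ! k) = i \<Longrightarrow> k = k0" for k using j k0 unfolding J_def by metis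
    have sh: "seq_hist (tr @ [Return i v]) = seq_hist tr @ [(inv_op (tr ! k0), v)]"
      by (rule seq_hist_ret[OF k0 uq]) (use seq_pend_last[OF s k0(1)] in auto)
    have l: "lr c i \<le> shR c" using d(1)[of i] ret by simp
    have key: "mr_legal M [(inv_op (tr ! k0), v)] \<and> shR c = mr_st M [(inv_op (tr ! k0), v)]"
    proof (cases "inv_op (tr ! k0)")
      case (RMaxWrite x)
      then have v: "v = RTrue" using mt ret by simp
      have "shR c = max M x" using d(5)[OF k0(1)] k0(2) ret v RMaxWrite by simp
      then show ?thesis using RMaxWrite v by simp
    next
      case RMaxRead
      then obtain y where v: "v = RVal y" using mt ret by auto
      have y: "y = M" using d(6)[of i y] ret v by simp
      have nd: "pc c j \<noteq> Done RTrue" for j using oth[of j] ret v by (cases "j = i") auto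
      have "shR c = M" using d(2) nd by blast
      then show ?thesis using RMaxRead v y by simp
    qed
    have M': "mr_st 1 (seq_hist (tr @ [a])) = mr_st M [(inv_op (tr ! k0), v)]"
      using sh ret(1) mr_snoc M_def by simp
    have lg': "mr_legal 1 (seq_hist (tr @ [a]))" using sh ret(1) mr_snoc lg key M_def by simp
    have "SQ' c' (tr @ [a]) (mr_st M [(inv_op (tr ! k0), v)])"
    proof (rule SQ'_I[where i = i])
      show "\<And>j. j \<noteq> i \<Longrightarrow> pc c' j = Idle" using ret oth by simp
      show "\<And>j. j \<noteq> i \<Longrightarrow> lr c' j \<le> shR c'" using ret oth d(1) by simp
      show "(\<And>x. pc c' i \<noteq> WWrA x) \<Longrightarrow> lr c' i \<le> shR c'" using ret l by simp
      show "pc c' i \<noteq> Done RTrue \<Longrightarrow> shR c' = mr_st M [(inv_op (tr ! k0), v)]" using ret key by simp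
    qed (use ret in auto)
    then show ?thesis using lg' M' by simp
  qed
qed


theorem theorem4:
  shows "\<exists>C::nat. \<forall>n::nat. n \<ge> 2 \<longrightarrow>
           alg_linearizable n \<and> sequentially_exact n \<and> wait_free n \<and> step_complexity_le n C"
proof (intro exI[of _ 2] allI impI conjI)
  fix n :: nat
  assume n: "n \<ge> 2"
  show "alg_linearizable n" using alg_lin n by simp
  show "sequentially_exact n" unfolding sequentially_exact_def using reach_SQ by blast
  show "wait_free n" by (rule wait_free_all)
  show "step_complexity_le n 2" by (rule step_complexity_2)
qed

end
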